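(* Let $\Theta$ be a suitable set of moduli of continuity and let $E\subset\mathrm{WTC}_\Theta(\mathbb R^M)$ have $L^1_{loc}$-equicontinuous $m$-bounds. Let $\overline E$ be the closure of $E$ in $(\mathrm{WTC}_\Theta(\mathbb R^M),\sigma_\Theta)$. Then the map $\varphi:\mathbb R\times\overline E\to\mathrm{WTC}_\Theta(\mathbb R^M)$, $\varphi(t,f)=f_t$, is well defined and continuous (with $\overline E$ and $\mathrm{WTC}_\Theta(\mathbb R^M)$ carrying $\sigma_\Theta$). In particular, if $f\in\mathrm{WTC}_\Theta(\mathbb R^M)$ has $L^1_{loc}$-equicontinuous $m$-bounds, then $(t,g)\mapsto g_t$ defines a continuous flow on $\mathrm{Hull}_{(\mathrm{WTC}_\Theta,\sigma_\Theta)}(f)$.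
   Context: Notation: $|\cdot|$ is the Euclidean norm on $\mathbb R^N$ and $B_j$ the closed ball of $\mathbb R^N$ of radius $j$ centered at $0$. $L^1_{loc}$ denotes real functions on $\mathbb R$ integrable on every compact interval. For $f:\mathbb R\times\mathbb R^N\to\mathbb R^M$ and $t\in\mathbb R$, $f_t(s,x)=f(s+t,x)$. A function $f$ satisfies (C1) if it is Borel measurable, and (C2) if for every compact $K\subset\mathbb R^N$ there is $m^K\in L^1_{loc}$ (an $m$-bound of $f$ on $K$) with $|f(t,x)|\le m^K(t)$ for all $x\in K$ and a.e. $t$. A suitable set of moduli of continuity is a countable family $\Theta=\{\theta^I_j\mid j\in\mathbb N,\ I=[q_1,q_2],\ q_1<q_2,\ q_1,q_2\in\mathbb Q\}$ of nondecreasing continuous functions $\theta^I_j:\mathbb R^+\to\mathbb R^+$ with $\theta^I_j(0)=0$ and $\theta^{I_1}_{j_1}\le\theta^{I_2}_{j_2}$ whenever $I_1\subseteq I_2$ and $j_1\le j_2$. $\mathcal K^I_j$ is the set of continuous $x:I\to B_j$ admitting $\theta^I_j$ as modulus of continuity. $\mathrm{WTC}_\Theta(\mathbb R^M)$ is the set of $f$ satisfying (C1), (C2) and (W): for each $j$ and $I=[q_1,q_2]$ with rational endpoints, if $x_n\in\mathcal K^I_j$ converge uniformly to $x\in\mathcal K^I_j$ then $\int_I f(t,x_n(t))dt\to\int_I f(t,x(t))dt$; functions differing only on a null subset of $\mathbb R^{1+N}$ are identified. $\sigma_\Theta$ is the topology on $\mathrm{WTC}_\Theta(\mathbb R^M)$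 generated by the seminorms $p_{I,j}(f)=\sup_{x\in\mathcal K^I_j}|\int_I f(t,x(t))\,dt|$. A set $S$ of nonnegative functions in $L^1_{loc}$ is $L^1_{loc}$-equicontinuous if for all $r,\varepsilon>0$ there is $\delta>0$ with $\sup_{m\in S}\int_s^t m<\varepsilon$ whenever $-r\le s\le t\le r$, $t-s<\delta$. A set $E$ has $L^1_{loc}$-equicontinuous $m$-bounds if for every $j\in\mathbb N$ there is an $L^1_{loc}$-equicontinuous set $S^j\subset L^1_{loc}$ consisting of $m$-bounds on $B_j$ of the functions of $E$ (one for each function); a single function $f$ has $L^1_{loc}$-equicontinuous $m$-bounds if $\{f_t\mid t\in\mathbb R\}$ does. $\mathrm{Hull}_{(\mathrm{WTC}_\Theta,\sigma_\Theta)}(f)$ is the closure of $\{f_t\mid t\in\mathbb R\}$ in $(\mathrm{WTC}_\Theta(\mathbb R^M),\sigma_\Theta)$. *)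

theory Defs
  imports "HOL-Analysis.Analysis"
begin

type_synonym modfam = "rat \<times> rat \<Rightarrow> nat \<Rightarrow> real \<Rightarrow> real"

text \<open>Rational closed intervals I = [q1,q2] are encoded by pairs (q1,q2) with q1 < q2.\<close>
definition valid_ivl :: "rat \<times> rat \<Rightarrow> bool" where
  "valid_ivl q \<longleftrightarrow> fst q < snd q"

definition ivl :: "rat \<times> rat \<Rightarrow> real set" where
  "ivl q = {real_of_rat (fst q) .. real_of_rat (snd q)}"

definition suitable_moduli :: "modfam \<Rightarrow> bool" where
  "suitable_moduli \<Theta> \<longleftrightarrow>
     (\<forall>q j. valid_ivl q \<longrightarrow>
        mono_on {0..} (\<Theta> q j) \<and> continuous_on {0..} (\<Theta> q j) \<and> \<Theta> q j 0 = 0 \<and>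
        (\<forall>r\<ge>0. \<Theta> q j r \<ge> 0)) \<and>
     (\<forall>q1 q2 j1 j2. valid_ivl q1 \<and> valid_ivl q2 \<and> ivl q1 \<subseteq> ivl q2 \<and> j1 \<le> j2 \<longrightarrow>
        (\<forall>r\<ge>0. \<Theta> q1 j1 r \<le> \<Theta> q2 j2 r))"

definition Kset :: "modfam \<Rightarrow> rat \<times> rat \<Rightarrow> nat \<Rightarrow> (real \<Rightarrow> 'a::euclidean_space) set" where
  "Kset \<Theta> q j = {x. continuous_on (ivl q) x \<and>
      (\<forall>t\<in>ivl q. norm (x t) \<le> real j) \<and>
      (\<forall>s\<in>ivl q. \<forall>t\<in>ivl q. norm (x t - x s) \<le> \<Theta> q j \<bar>t - s\<bar>)}"

definition curve_int :: "rat \<times> rat \<Rightarrow> (real \<Rightarrow> 'a \<Rightarrow> 'b::euclidean_space) \<Rightarrow> (real \<Rightarrow> 'a) \<Rightarrow> 'b" where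
  "curve_int q f x = (LINT t:ivl q|lborel. f t (x t))"

definition L1loc :: "(real \<Rightarrow> real) \<Rightarrow> bool" where
  "L1loc m \<longleftrightarrow> (\<forall>a b. set_integrable lborel {a..b} m)"

definition C1 :: "(real \<Rightarrow> 'a::euclidean_space \<Rightarrow> 'b::euclidean_space) \<Rightarrow> bool" where
  "C1 f \<longleftrightarrow> case_prod f \<in> borel_measurable borel"

definition mbound :: "(real \<Rightarrow> 'a::euclidean_space \<Rightarrow> 'b::euclidean_space) \<Rightarrow> 'a set \<Rightarrow> (real \<Rightarrow> real) \<Rightarrow> bool" where
  "mbound f K m \<longleftrightarrow> L1loc m \<and> (AE t in lborel. \<forall>x\<in>K. norm (f t x) \<le> m t)"

definition C2 :: "(real \<Rightarrow> 'a::euclidean_space \<Rightarrow> 'b::euclidean_space) \<Rightarrow> bool" where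
  "C2 f \<longleftrightarrow> (\<forall>K. compact K \<longrightarrow> (\<exists>m. mbound f K m))"

definition condW :: "modfam \<Rightarrow> (real \<Rightarrow> 'a::euclidean_space \<Rightarrow> 'b::euclidean_space) \<Rightarrow> bool" where
  "condW \<Theta> f \<longleftrightarrow> (\<forall>q j xs x. valid_ivl q \<and> (\<forall>n. xs n \<in> Kset \<Theta> q j) \<and> x \<in> Kset \<Theta> q j \<and>
       uniform_limit (ivl q) xs x sequentially \<longrightarrow>
       (\<lambda>n. curve_int q f (xs n)) \<longlonglongrightarrow> curve_int q f x)"

definition WTC :: "modfam \<Rightarrow> (real \<Rightarrow> 'a::euclidean_space \<Rightarrow> 'b::euclidean_space) set" where
  "WTC \<Theta> = {f. C1 f \<and> C2 f \<and> condW \<Theta> f}"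

definition pIj :: "modfam \<Rightarrow> rat \<times> rat \<Rightarrow> nat \<Rightarrow> (real \<Rightarrow> 'a::euclidean_space \<Rightarrow> 'b::euclidean_space) \<Rightarrow> real" where
  "pIj \<Theta> q j f = (SUP x\<in>Kset \<Theta> q j. norm (curve_int q f x))"

definition sigma_top :: "modfam \<Rightarrow> (real \<Rightarrow> 'a::euclidean_space \<Rightarrow> 'b::euclidean_space) topology" where
  "sigma_top \<Theta> = topology (\<lambda>U. U \<subseteq> WTC \<Theta> \<and>
     (\<forall>f\<in>U. \<exists>F e. finite F \<and> F \<subseteq> {(q,j). valid_ivl q} \<and> e > 0 \<and>
        {g\<in>WTC \<Theta>. \<forall>(q,j)\<in>F. pIj \<Theta> q j (\<lambda>t x. g t x - f t x) < e} \<subseteq> U))"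

definition shift :: "real \<Rightarrow> (real \<Rightarrow> 'a \<Rightarrow> 'b) \<Rightarrow> (real \<Rightarrow> 'a \<Rightarrow> 'b)" where
  "shift t f = (\<lambda>s x. f (s + t) x)"

definition L1loc_equicont :: "(real \<Rightarrow> real) set \<Rightarrow> bool" where
  "L1loc_equicont S \<longleftrightarrow> (\<forall>m\<in>S. L1loc m \<and> (\<forall>t. m t \<ge> 0)) \<and>
     (\<forall>r>0. \<forall>e>0. \<exists>d>0. \<forall>m\<in>S. \<forall>s t. -r \<le> s \<and> s \<le> t \<and> t \<le> r \<and> t - s < d \<longrightarrow>
        (LINT u:{s..t}|lborel. m u) < e)"

definition equicont_mbounds :: "(real \<Rightarrow> 'a::euclidean_space \<Rightarrow> 'b::euclidean_space) set \<Rightarrow> bool" where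
  "equicont_mbounds E \<longleftrightarrow> (\<forall>j::nat. \<exists>mb. (\<forall>f\<in>E. mbound f (cball 0 (real j)) (mb f)) \<and>
        L1loc_equicont (mb ` E))"

definition equicont_mbounds_fun :: "(real \<Rightarrow> 'a::euclidean_space \<Rightarrow> 'b::euclidean_space) \<Rightarrow> bool" where
  "equicont_mbounds_fun f \<longleftrightarrow> equicont_mbounds (range (\<lambda>t. shift t f))"

definition Hull :: "modfam \<Rightarrow> (real \<Rightarrow> 'a::euclidean_space \<Rightarrow> 'b::euclidean_space) \<Rightarrow> (real \<Rightarrow> 'a \<Rightarrow> 'b) set" where
  "Hull \<Theta> f = (sigma_top \<Theta>) closure_of (range (\<lambda>t. shift t f))"

end

theory Submission
  imports Defs "HOL-Complex_Analysis.Great_Picard"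
begin
lemma clamp_cont: "continuous_on UNIV (\<lambda>u::real. max a (min b u))"
  by (intro continuous_intros)

lemma INT:
  fixes h :: "real \<Rightarrow> 'a::euclidean_space \<Rightarrow> 'b::euclidean_space"
  assumes C1: "C1 h" and mb: "mbound h (cball 0 j) m" and ab: "a \<le> b"
    and yc: "continuous_on {a..b} y" and yb: "\<forall>u\<in>{a..b}. norm (y u) \<le> j"
  shows "set_integrable lborel {a..b} (\<lambda>u. h u (y u))"
    and "(\<lambda>u. h u (y u)) integrable_on {a..b}"
    and "(LINT u:{a..b}|lborel. h u (y u)) = integral {a..b} (\<lambda>u. h u (y u))"
    and "norm (integral {a..b} (\<lambda>u. h u (y u))) \<le> integral {a..b} m"
    and "m integrable_on {a..b}"
    and "(LINT u:{a..b}|lborel. m u) = integral {a..b} m"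
proof -
  define y' where "y' = (\<lambda>u. y (max a (min b u)))"
  have cont: "continuous_on UNIV y'"
    unfolding y'_def
    by (rule continuous_on_compose2[OF yc clamp_cont]) (use ab in auto)
  have eq: "\<And>u. u \<in> {a..b} \<Longrightarrow> y' u = y u" by (auto simp: y'_def)
  have "(\<lambda>u. (u, y' u)) \<in> borel_measurable borel"
    by (intro borel_measurable_continuous_onI continuous_intros cont)
  moreover have "case_prod h \<in> borel_measurable borel" using C1 by (simp add: C1_def)
  ultimately have "(\<lambda>u. case_prod h (u, y' u)) \<in> borel_measurable borel"
    by (rule measurable_compose)
  hence meas: "(\<lambda>u. h u (y' u)) \<in> borel_measurable lborel" by simp
  have mi: "set_integrable lborel {a..b} m" using mb by (simp add: mbound_def L1loc_def)
  have ae: "AE u in lborel. \<forall>x\<in>cball 0 j. norm (h u x) \<le> m u" using mb by (simp add: mbound_def)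
  have ae2: "AE u in lborel. u \<in> {a..b} \<longrightarrow> norm (h u (y' u)) \<le> norm (m u)"
    using ae
  proof eventually_elim
    case (elim u)
    show ?case
    proof
      assume "u \<in> {a..b}"
      then have "y' u \<in> cball 0 j" using yb eq by auto
      then have "norm (h u (y' u)) \<le> m u" using elim by auto
      then show "norm (h u (y' u)) \<le> norm (m u)" by simp
    qed
  qed
  have ae3: "AE u in lborel. u \<in> {a..b} \<longrightarrow> norm (h u (y' u)) \<le> m u"
    using ae
  proof eventually_elim
    case (elim u)
    show ?case using elim yb eq by auto
  qed
  have sbm: "set_borel_measurable lborel {a..b} (\<lambda>u. h u (y' u))"
    unfolding set_borel_measurable_def
    by (intro borel_measurable_scaleR borel_measurable_indicator meas) auto
  have si': "set_integrable lborel {a..b} (\<lambda>u. h u (y' u))"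
    by (rule set_integrable_bound[OF mi sbm ae2])
  show si: "set_integrable lborel {a..b} (\<lambda>u. h u (y u))"
    using si' by (subst set_integrable_cong[where f'="\<lambda>u. h u (y' u)"]) (auto simp: eq)
  show "(\<lambda>u. h u (y u)) integrable_on {a..b}"
    using set_borel_integral_eq_integral(1)[OF si] .
  show e1: "(LINT u:{a..b}|lborel. h u (y u)) = integral {a..b} (\<lambda>u. h u (y u))"
    using set_borel_integral_eq_integral(2)[OF si] .
  show "m integrable_on {a..b}" using set_borel_integral_eq_integral(1)[OF mi] .
  show e2: "(LINT u:{a..b}|lborel. m u) = integral {a..b} m"
    using set_borel_integral_eq_integral(2)[OF mi] .
  have "norm (LINT u:{a..b}|lborel. h u (y' u)) \<le> (LINT u:{a..b}|lborel. norm (h u (y' u)))"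
    by (rule set_integral_norm_bound[OF si'])
  also have "\<dots> \<le> (LINT u:{a..b}|lborel. m u)"
    by (rule set_integral_mono_AE[OF set_integrable_norm[OF si'] mi]) (use ae3 in simp)
  finally have "norm (LINT u:{a..b}|lborel. h u (y' u)) \<le> (LINT u:{a..b}|lborel. m u)" .
  moreover have "(LINT u:{a..b}|lborel. h u (y' u)) = (LINT u:{a..b}|lborel. h u (y u))"
    by (rule set_lebesgue_integral_cong) (auto simp: eq)
  ultimately show "norm (integral {a..b} (\<lambda>u. h u (y u))) \<le> integral {a..b} m"
    using e1 e2 by simp
qed

definition nb :: "modfam \<Rightarrow> ((rat \<times> rat) \<times> nat) set \<Rightarrow> real \<Rightarrow> (real \<Rightarrow> 'a::euclidean_space \<Rightarrow> 'b::euclidean_space) \<Rightarrow> (real \<Rightarrow> 'a \<Rightarrow> 'b) set" where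
  "nb \<Theta> F e f = {g\<in>WTC \<Theta>. \<forall>(q,j)\<in>F. pIj \<Theta> q j (\<lambda>t x. g t x - f t x) < e}"

definition sigopen :: "modfam \<Rightarrow> (real \<Rightarrow> 'a::euclidean_space \<Rightarrow> 'b::euclidean_space) set \<Rightarrow> bool" where
  "sigopen \<Theta> U \<longleftrightarrow> U \<subseteq> WTC \<Theta> \<and>
     (\<forall>f\<in>U. \<exists>F e. finite F \<and> F \<subseteq> {(q,j). valid_ivl q} \<and> e > 0 \<and> nb \<Theta> F e f \<subseteq> U)"

lemma istop_sig: "istopology (sigopen \<Theta> :: (real \<Rightarrow> 'a::euclidean_space \<Rightarrow> 'b::euclidean_space) set \<Rightarrow> bool)"
  unfolding istopology_def
proof (intro conjI allI impI)
  fix S T :: "(real \<Rightarrow> 'a \<Rightarrow> 'b) set" assume S: "sigopen \<Theta> S" and T: "sigopen \<Theta> T"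
  show "sigopen \<Theta> (S \<inter> T)"
    unfolding sigopen_def
  proof (intro conjI ballI)
    show "S \<inter> T \<subseteq> WTC \<Theta>" using S by (auto simp: sigopen_def)
    fix f assume "f \<in> S \<inter> T"
    then obtain F1 e1 F2 e2 where 1: "finite F1" "F1 \<subseteq> {(q,j). valid_ivl q}" "e1 > 0" "nb \<Theta> F1 e1 f \<subseteq> S"
      and 2: "finite F2" "F2 \<subseteq> {(q,j). valid_ivl q}" "e2 > 0" "nb \<Theta> F2 e2 f \<subseteq> T"
      using S T unfolding sigopen_def by blast
    have "nb \<Theta> (F1 \<union> F2) (min e1 e2) f \<subseteq> nb \<Theta> F1 e1 f"
      "nb \<Theta> (F1 \<union> F2) (min e1 e2) f \<subseteq> nb \<Theta> F2 e2 f"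
      unfolding nb_def by (auto simp: case_prod_beta)
    then have "nb \<Theta> (F1 \<union> F2) (min e1 e2) f \<subseteq> S \<inter> T"
      using 1(4) 2(4) by blast
    then show "\<exists>F e. finite F \<and> F \<subseteq> {(q,j). valid_ivl q} \<and> e > 0 \<and> nb \<Theta> F e f \<subseteq> S \<inter> T"
      using 1 2 by (intro exI[of _ "F1 \<union> F2"] exI[of _ "min e1 e2"]) auto
  qed
next
  fix K :: "(real \<Rightarrow> 'a \<Rightarrow> 'b) set set" assume K: "\<forall>S\<in>K. sigopen \<Theta> S"
  show "sigopen \<Theta> (\<Union>K)"
    unfolding sigopen_def
  proof (intro conjI ballI)
    show "\<Union>K \<subseteq> WTC \<Theta>" using K by (auto simp: sigopen_def)
    fix f assume "f \<in> \<Union>K"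
    then obtain S where "S \<in> K" "f \<in> S" by auto
    then have "sigopen \<Theta> S" using K by blast
    then obtain F e where "finite F" "F \<subseteq> {(q,j). valid_ivl q}" "e > 0" "nb \<Theta> F e f \<subseteq> S"
      using \<open>f \<in> S\<close> unfolding sigopen_def by blast
    then show "\<exists>F e. finite F \<and> F \<subseteq> {(q,j). valid_ivl q} \<and> e > 0 \<and> nb \<Theta> F e f \<subseteq> \<Union>K"
      using \<open>S \<in> K\<close> by blast
  qed
qed

lemma sigma_top_eq: "sigma_top \<Theta> = topology (sigopen \<Theta>)"
  unfolding sigma_top_def sigopen_def nb_def by simp

lemma openin_sigma: "openin (sigma_top \<Theta>) U = sigopen \<Theta> U"
  unfolding sigma_top_eq by (simp add: topology_inverse'[OF istop_sig])

lemma topspace_sigma: "topspace (sigma_top \<Theta>) = WTC \<Theta>"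
proof -
  have "sigopen \<Theta> (WTC \<Theta>)" unfolding sigopen_def nb_def
    by (auto intro!: exI[of _ "{}"] exI[of _ 1])
  then have "WTC \<Theta> \<subseteq> topspace (sigma_top \<Theta>)"
    using openin_subset openin_sigma by metis
  moreover have "topspace (sigma_top \<Theta>) \<subseteq> WTC \<Theta>"
    using openin_sigma[of \<Theta> "topspace (sigma_top \<Theta>)"] unfolding sigopen_def by blast
  ultimately show ?thesis by blast
qed

lemma valid_le: "valid_ivl q \<Longrightarrow> real_of_rat (fst q) \<le> real_of_rat (snd q)"
  by (auto simp: valid_ivl_def of_rat_less_eq)

lemma ivl_eq: "ivl q = {real_of_rat (fst q)..real_of_rat (snd q)}" by (simp add: ivl_def)

lemma suitable_nonneg: assumes s: "suitable_moduli \<Theta>" and v: "valid_ivl q" and r: "r \<ge> 0" shows "\<Theta> q j r \<ge> 0"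
  using conjunct1[OF s[unfolded suitable_moduli_def], rule_format, OF v] r by auto

lemma zero_Kset: "suitable_moduli \<Theta> \<Longrightarrow> valid_ivl q \<Longrightarrow> (\<lambda>_. 0) \<in> Kset \<Theta> q j"
  unfolding Kset_def using suitable_nonneg by auto

lemma const_Kset: "suitable_moduli \<Theta> \<Longrightarrow> valid_ivl q \<Longrightarrow> norm c \<le> real j \<Longrightarrow> (\<lambda>_. c) \<in> Kset \<Theta> q j"
  unfolding Kset_def using suitable_nonneg by auto

lemma WTC_mbound: "f \<in> WTC \<Theta> \<Longrightarrow> \<exists>m. mbound f (cball 0 r) m"
  unfolding WTC_def C2_def by auto

lemma WTC_C1: "f \<in> WTC \<Theta> \<Longrightarrow> C1 f"
  unfolding WTC_def by auto

lemma Kset_cont: "x \<in> Kset \<Theta> q j \<Longrightarrow> continuous_on (ivl q) x"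
  and Kset_bound: "x \<in> Kset \<Theta> q j \<Longrightarrow> t \<in> ivl q \<Longrightarrow> norm (x t) \<le> real j"
  and Kset_mod: "x \<in> Kset \<Theta> q j \<Longrightarrow> s \<in> ivl q \<Longrightarrow> t \<in> ivl q \<Longrightarrow> norm (x t - x s) \<le> \<Theta> q j \<bar>t - s\<bar>"
  unfolding Kset_def by auto

lemma curve_int_bound:
  assumes "f \<in> WTC \<Theta>" "valid_ivl q" "x \<in> Kset \<Theta> q j"
  obtains B where "\<And>x. x \<in> Kset \<Theta> q j \<Longrightarrow> norm (curve_int q f x) \<le> B"
proof -
  obtain m where m: "mbound f (cball 0 (real j)) m" using WTC_mbound assms(1) by blast
  have "norm (curve_int q f x) \<le> integral (ivl q) m" if "x \<in> Kset \<Theta> q j" for x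
  proof -
    have c: "continuous_on {real_of_rat (fst q)..real_of_rat (snd q)} x"
      using Kset_cont[OF that] by (simp add: ivl_eq)
    have b: "\<forall>u\<in>{real_of_rat (fst q)..real_of_rat (snd q)}. norm (x u) \<le> real j"
      using Kset_bound[OF that] by (simp add: ivl_eq)
    show ?thesis
      using INT(3,4)[OF WTC_C1[OF assms(1)] m valid_le[OF assms(2)] c b]
      unfolding curve_int_def ivl_eq by simp
  qed
  then show ?thesis using that by blast
qed

lemma curve_int_diff:
  assumes "f \<in> WTC \<Theta>" "g \<in> WTC \<Theta>" "valid_ivl q" "x \<in> Kset \<Theta> q j"
  shows "curve_int q (\<lambda>t x. g t x - f t x) x = curve_int q g x - curve_int q f x"
proof -
  obtain m where m: "mbound f (cball 0 (real j)) m" using WTC_mbound assms(1) by blast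
  obtain m' where m': "mbound g (cball 0 (real j)) m'" using WTC_mbound assms(2) by blast
  have c: "continuous_on {real_of_rat (fst q)..real_of_rat (snd q)} x"
    using Kset_cont[OF assms(4)] by (simp add: ivl_eq)
  have b: "\<forall>u\<in>{real_of_rat (fst q)..real_of_rat (snd q)}. norm (x u) \<le> real j"
    using Kset_bound[OF assms(4)] by (simp add: ivl_eq)
  note i1 = INT(1)[OF WTC_C1[OF assms(1)] m valid_le[OF assms(3)] c b]
  note i2 = INT(1)[OF WTC_C1[OF assms(2)] m' valid_le[OF assms(3)] c b]
  show ?thesis unfolding curve_int_def ivl_eq
    using set_integral_diff(2)[OF i2 i1] by simp
qed

lemma pIj_upper:
  fixes f g :: "real \<Rightarrow> 'a::euclidean_space \<Rightarrow> 'b::euclidean_space"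
  assumes "suitable_moduli \<Theta>" "f \<in> WTC \<Theta>" "g \<in> WTC \<Theta>" "valid_ivl q" "x \<in> Kset \<Theta> q j"
  shows "norm (curve_int q g x - curve_int q f x) \<le> pIj \<Theta> q j (\<lambda>t x. g t x - f t x)"
proof -
  obtain B1 where B1: "\<And>x. x \<in> Kset \<Theta> q j \<Longrightarrow> norm (curve_int q f x) \<le> B1"
    using curve_int_bound[OF assms(2,4,5)] by blast
  obtain B2 where B2: "\<And>x. x \<in> Kset \<Theta> q j \<Longrightarrow> norm (curve_int q g x) \<le> B2"
    using curve_int_bound[OF assms(3,4,5)] by blast
  have "bdd_above ((\<lambda>x. norm (curve_int q (\<lambda>t x. g t x - f t x) x)) ` Kset \<Theta> q j)"
  proof (rule bdd_aboveI2)
    fix x :: "real \<Rightarrow> 'a" assume x: "x \<in> Kset \<Theta> q j"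
    have "norm (curve_int q (\<lambda>t x. g t x - f t x) x) \<le> norm (curve_int q g x) + norm (curve_int q f x)"
      using curve_int_diff[OF assms(2,3,4) x] norm_triangle_ineq4 by simp
    also have "\<dots> \<le> B2 + B1" using B1[OF x] B2[OF x] by simp
    finally show "norm (curve_int q (\<lambda>t x. g t x - f t x) x) \<le> B2 + B1" .
  qed
  then have "norm (curve_int q (\<lambda>t x. g t x - f t x) x) \<le> pIj \<Theta> q j (\<lambda>t x. g t x - f t x)"
    unfolding pIj_def by (rule cSUP_upper[OF assms(5)])
  then show ?thesis using curve_int_diff[OF assms(2,3,4,5)] by simp
qed

lemma pIj_least:
  fixes f g h :: "real \<Rightarrow> 'a::euclidean_space \<Rightarrow> 'b::euclidean_space"
  assumes "suitable_moduli \<Theta>" "f \<in> WTC \<Theta>" "g \<in> WTC \<Theta>" "valid_ivl q"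
    and "\<And>x. x \<in> Kset \<Theta> q j \<Longrightarrow> norm (curve_int q g x - curve_int q f x) \<le> c"
  shows "pIj \<Theta> q j (\<lambda>t x. g t x - f t x) \<le> c"
  unfolding pIj_def
proof (rule cSUP_least)
  show "Kset \<Theta> q j \<noteq> {}" using zero_Kset[OF assms(1,4)] by auto
  fix x :: "real \<Rightarrow> 'a" assume x: "x \<in> Kset \<Theta> q j"
  show "norm (curve_int q (\<lambda>t x. g t x - f t x) x) \<le> c"
    using assms(5)[OF x] curve_int_diff[OF assms(2,3,4) x] by simp
qed

lemma pIj_nonneg:
  fixes f g h :: "real \<Rightarrow> 'a::euclidean_space \<Rightarrow> 'b::euclidean_space"
  assumes "suitable_moduli \<Theta>" "f \<in> WTC \<Theta>" "g \<in> WTC \<Theta>" "valid_ivl q"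
  shows "0 \<le> pIj \<Theta> q j (\<lambda>t x. g t x - f t x)"
  using pIj_upper[OF assms zero_Kset[OF assms(1,4)]] norm_ge_zero order_trans by blast

lemma pIj_self:
  fixes f g h :: "real \<Rightarrow> 'a::euclidean_space \<Rightarrow> 'b::euclidean_space"
  assumes "suitable_moduli \<Theta>" "f \<in> WTC \<Theta>" "valid_ivl q"
  shows "pIj \<Theta> q j (\<lambda>t x. f t x - f t x) = 0"
  using pIj_least[OF assms(1,2,2,3), of j 0] pIj_nonneg[OF assms(1,2,2,3), of j] by simp

lemma pIj_sym:
  fixes f g h :: "real \<Rightarrow> 'a::euclidean_space \<Rightarrow> 'b::euclidean_space"
  assumes "suitable_moduli \<Theta>" "f \<in> WTC \<Theta>" "g \<in> WTC \<Theta>" "valid_ivl q"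
  shows "pIj \<Theta> q j (\<lambda>t x. g t x - f t x) = pIj \<Theta> q j (\<lambda>t x. f t x - g t x)"
proof (rule antisym)
  show "pIj \<Theta> q j (\<lambda>t x. g t x - f t x) \<le> pIj \<Theta> q j (\<lambda>t x. f t x - g t x)"
    using pIj_least[OF assms(1,2,3,4)] pIj_upper[OF assms(1,3,2,4)] by (simp add: norm_minus_commute)
  show "pIj \<Theta> q j (\<lambda>t x. f t x - g t x) \<le> pIj \<Theta> q j (\<lambda>t x. g t x - f t x)"
    using pIj_least[OF assms(1,3,2,4)] pIj_upper[OF assms(1,2,3,4)] by (simp add: norm_minus_commute)
qed

lemma pIj_tri:
  fixes f g h :: "real \<Rightarrow> 'a::euclidean_space \<Rightarrow> 'b::euclidean_space"
  assumes "suitable_moduli \<Theta>" "f \<in> WTC \<Theta>" "g \<in> WTC \<Theta>" "h \<in> WTC \<Theta>" "valid_ivl q"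
  shows "pIj \<Theta> q j (\<lambda>t x. g t x - f t x) \<le> pIj \<Theta> q j (\<lambda>t x. g t x - h t x) + pIj \<Theta> q j (\<lambda>t x. h t x - f t x)"
proof (rule pIj_least[OF assms(1,2,3,5)])
  fix x :: "real \<Rightarrow> 'a" assume x: "x \<in> Kset \<Theta> q j"
  have "norm (curve_int q g x - curve_int q f x) \<le> norm (curve_int q g x - curve_int q h x) + norm (curve_int q h x - curve_int q f x)"
    by (rule norm_diff_triangle_le) auto
  also have "\<dots> \<le> pIj \<Theta> q j (\<lambda>t x. g t x - h t x) + pIj \<Theta> q j (\<lambda>t x. h t x - f t x)"
    using pIj_upper[OF assms(1,4,3,5) x] pIj_upper[OF assms(1,2,4,5) x] by simp
  finally show "norm (curve_int q g x - curve_int q f x) \<le> pIj \<Theta> q j (\<lambda>t x. g t x - h t x) + pIj \<Theta> q j (\<lambda>t x. h t x - f t x)" .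
qed

lemma AE_shift:
  assumes "AE u in lborel. P u"
  shows "AE s in lborel. P (s + t)"
proof -
  from assms obtain N where N: "{x \<in> space lborel. \<not> P x} \<subseteq> N" "emeasure lborel N = 0" "N \<in> sets lborel"
    by (rule AE_E)
  have Nb: "N \<in> sets borel" using N(3) by simp
  have "emeasure (distr lborel borel ((+) t)) N = emeasure lborel ((+) t -` N \<inter> space lborel)"
    by (rule emeasure_distr) (use Nb in auto)
  then have "emeasure lborel ((+) t -` N) = 0" using N(2) by (simp add: lborel_distr_plus)
  moreover have "(+) t -` N \<in> sets lborel"
    using measurable_sets[of "(+) t" lborel borel N] Nb by simp
  ultimately have "(+) t -` N \<in> null_sets lborel" by (simp add: null_sets_def)
  then show ?thesis
    by (rule AE_I') (use N(1) in \<open>auto simp: add.commute\<close>)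
qed

lemma shift_C1: "C1 f \<Longrightarrow> C1 (shift t f)"
proof -
  assume "C1 f"
  then have f: "case_prod f \<in> borel_measurable borel" by (simp add: C1_def)
  have "(\<lambda>p::real \<times> 'a. (fst p + t, snd p)) \<in> borel_measurable borel"
    by (intro borel_measurable_continuous_onI continuous_intros)
  from measurable_compose[OF this f]
  show "C1 (shift t f)" by (simp add: C1_def shift_def case_prod_beta)
qed

lemma L1loc_shift: "L1loc m \<Longrightarrow> L1loc (\<lambda>s. m (s + t))"
  unfolding L1loc_def
proof (intro allI)
  fix a b
  assume "\<forall>a b. set_integrable lborel {a..b} m"
  then have "integrable lborel (\<lambda>u. indicator {a+t..b+t} u *\<^sub>R m u)"
    by (simp add: set_integrable_def)
  from lborel_integrable_real_affine[OF this, of 1 t]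
  have "integrable lborel (\<lambda>s. indicator {a+t..b+t} (t + s) *\<^sub>R m (t + s))" by simp
  moreover have "(\<lambda>s. indicator {a+t..b+t} (t + s) *\<^sub>R m (t + s)) = (\<lambda>s. indicator {a..b} s *\<^sub>R m (s + t))"
    by (auto simp: indicator_def add.commute)
  ultimately show "set_integrable lborel {a..b} (\<lambda>s. m (s + t))"
    by (simp add: set_integrable_def)
qed

lemma mbound_shift: "mbound f K m \<Longrightarrow> mbound (shift t f) K (\<lambda>s. m (s + t))"
  unfolding mbound_def
  using L1loc_shift AE_shift[where P="\<lambda>u. \<forall>x\<in>K. norm (f u x) \<le> m u"]
  by (auto simp: shift_def)

lemma shift_C2: "C2 f \<Longrightarrow> C2 (shift t f)"
  unfolding C2_def using mbound_shift by blast

lemma shift_shift: "shift t (shift s f) = shift (s + t) f"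
  unfolding shift_def by (auto simp: fun_eq_iff algebra_simps)

lemma shift_add: "shift (t + s) f = shift t (shift s f)"
  unfolding shift_def by (auto simp: fun_eq_iff algebra_simps)

lemma shift_0: "shift 0 f = f"
  by (simp add: shift_def)

lemma clamp_in: "l \<le> r \<Longrightarrow> max l (min r (u::real)) \<in> {l..r}" by auto
lemma clamp_id: "u \<in> {l..r} \<Longrightarrow> max l (min r (u::real)) = u" by auto
lemma clamp_lip: "\<bar>max l (min r (u::real)) - max l (min r v)\<bar> \<le> \<bar>u - v\<bar>" by auto

lemma clamp_curve_cont:
  fixes l r t :: real
  assumes "l \<le> r" "continuous_on {l..r} x"
  shows "continuous_on UNIV (\<lambda>u. x (max l (min r (u - t))))"
proof -
  have "continuous_on UNIV (\<lambda>u::real. max l (min r (u - t)))"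
    by (intro continuous_intros)
  then show ?thesis
    by (rule continuous_on_compose2[OF assms(2)]) (use assms(1) in auto)
qed

lemma suitable_mono:
  assumes "suitable_moduli \<Theta>" "valid_ivl q" "a \<ge> 0" "b \<ge> 0" "a \<le> b"
  shows "\<Theta> q j a \<le> \<Theta> q j b"
proof -
  have "mono_on {0..} (\<Theta> q j)" using assms(1,2) unfolding suitable_moduli_def by blast
  then show ?thesis using assms(3-5) by (auto intro: mono_onD)
qed

lemma suitable_incl:
  assumes "suitable_moduli \<Theta>" "valid_ivl q1" "valid_ivl q2" "ivl q1 \<subseteq> ivl q2" "j1 \<le> j2" "r \<ge> 0"
  shows "\<Theta> q1 j1 r \<le> \<Theta> q2 j2 r"
  using assms unfolding suitable_moduli_def by blast

lemma zK:
  assumes s: "suitable_moduli \<Theta>" and vq: "valid_ivl q" and vJ: "valid_ivl J"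
    and sub: "ivl q \<subseteq> ivl J" and x: "x \<in> Kset \<Theta> q j"
  shows "(\<lambda>u. x (max (real_of_rat (fst q)) (min (real_of_rat (snd q)) (u - t)))) \<in> Kset \<Theta> J j"
proof -
  define l where "l = real_of_rat (fst q)"
  define r where "r = real_of_rat (snd q)"
  have lr: "l \<le> r" using valid_le[OF vq] by (simp add: l_def r_def)
  have iq: "ivl q = {l..r}" by (simp add: ivl_eq l_def r_def)
  have c: "continuous_on UNIV (\<lambda>u. x (max l (min r (u - t))))"
    by (rule clamp_curve_cont[OF lr]) (use Kset_cont[OF x] iq in simp)
  show ?thesis
    unfolding Kset_def l_def[symmetric] r_def[symmetric]
  proof (intro CollectI conjI ballI)
    show "continuous_on (ivl J) (\<lambda>u. x (max l (min r (u - t))))"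
      using c continuous_on_subset by blast
    fix u assume "u \<in> ivl J"
    show "norm (x (max l (min r (u - t)))) \<le> real j"
      using Kset_bound[OF x] clamp_in[OF lr] iq by auto
  next
    fix u v assume u: "u \<in> ivl J" and v: "v \<in> ivl J"
    have "norm (x (max l (min r (v - t))) - x (max l (min r (u - t))))
          \<le> \<Theta> q j \<bar>max l (min r (v - t)) - max l (min r (u - t))\<bar>"
      using Kset_mod[OF x] clamp_in[OF lr] iq by auto
    also have "\<dots> \<le> \<Theta> q j \<bar>v - u\<bar>"
      using suitable_mono[OF s vq] clamp_lip[of l r "v - t" "u - t"] by auto
    also have "\<dots> \<le> \<Theta> J j \<bar>v - u\<bar>"
      by (rule suitable_incl[OF s vq vJ sub]) auto
    finally show "norm (x (max l (min r (v - t))) - x (max l (min r (u - t)))) \<le> \<Theta> J j \<bar>v - u\<bar>" .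
  qed
qed

lemma INTW:
  assumes "C1 h" "C2 h" "a \<le> b" "continuous_on {a..b} y" "\<forall>u\<in>{a..b}. norm (y u) \<le> real j"
  shows "(\<lambda>u. h u (y u)) integrable_on {a..b}"
    and "\<exists>m. L1loc m \<and> norm (integral {a..b} (\<lambda>u. h u (y u))) \<le> integral {a..b} m"
proof -
  obtain m where m: "mbound h (cball 0 (real j)) m" using assms(2) compact_cball unfolding C2_def by blast
  show "(\<lambda>u. h u (y u)) integrable_on {a..b}" using INT(2)[OF assms(1) m assms(3-5)] .
  show "\<exists>m. L1loc m \<and> norm (integral {a..b} (\<lambda>u. h u (y u))) \<le> integral {a..b} m"
    using INT(4)[OF assms(1) m assms(3-5)] m by (auto simp: mbound_def)
qed

lemma DECOMP:
  assumes C1: "C1 h" and C2: "C2 h" and vq: "valid_ivl q" and x: "x \<in> Kset \<Theta> q j"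
    and a: "a \<le> real_of_rat (fst q) + t" and b: "real_of_rat (snd q) + t \<le> b"
  shows "curve_int q (shift t h) x =
    integral {a..b} (\<lambda>u. h u (x (max (real_of_rat (fst q)) (min (real_of_rat (snd q)) (u - t)))))
    - integral {a..real_of_rat (fst q) + t} (\<lambda>u. h u (x (real_of_rat (fst q))))
    - integral {a..b} (\<lambda>u. h u (x (real_of_rat (snd q))))
    + integral {a..real_of_rat (snd q) + t} (\<lambda>u. h u (x (real_of_rat (snd q))))"
proof -
  define l where "l = real_of_rat (fst q)"
  define r where "r = real_of_rat (snd q)"
  define z where "z = (\<lambda>u. x (max l (min r (u - t))))"
  have lr: "l \<le> r" using valid_le[OF vq] by (simp add: l_def r_def)
  have iq: "ivl q = {l..r}" by (simp add: ivl_eq l_def r_def)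
  have xc: "continuous_on {l..r} x" using Kset_cont[OF x] iq by simp
  have xb: "\<forall>u\<in>{l..r}. norm (x u) \<le> real j" using Kset_bound[OF x] iq by simp
  have zc: "continuous_on UNIV z" unfolding z_def by (rule clamp_curve_cont[OF lr xc])
  have zb: "\<forall>u. norm (z u) \<le> real j" using xb clamp_in[OF lr] unfolding z_def by blast
  have a': "a \<le> l + t" and b': "r + t \<le> b" using a b by (simp_all add: l_def r_def)
  obtain m where m: "mbound (shift t h) (cball 0 (real j)) m"
    using shift_C2[OF C2] compact_cball unfolding C2_def by blast
  have "curve_int q (shift t h) x = integral {l..r} (\<lambda>s. shift t h s (x s))"
    using INT(3)[OF shift_C1[OF C1] m lr xc xb] by (simp add: curve_int_def iq)
  also have "\<dots> = integral {l..r} (\<lambda>s. h (s + t) (z (s + t)))"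
    by (rule integral_cong) (auto simp: shift_def z_def)
  also have "\<dots> = integral {l + t - t..r + t - t} (\<lambda>s. (\<lambda>u. h u (z u)) (s + t))" by simp
  also have "\<dots> = integral {l + t..r + t} (\<lambda>u. h u (z u))"
    by (rule integral_shift_real_ivl)
  finally have e1: "curve_int q (shift t h) x = integral {l + t..r + t} (\<lambda>u. h u (z u))" .
  have ab: "a \<le> b" using a' b' lr by simp
  have hz: "(\<lambda>u. h u (z u)) integrable_on {a..b}"
    by (rule INTW(1)[OF C1 C2 ab]) (use zc zb continuous_on_subset[OF zc, of "{a..b}"] in auto)
  have hr: "(\<lambda>u. h u (x r)) integrable_on {a..b}"
    by (rule INTW(1)[OF C1 C2 ab]) (use xb lr in auto)
  have c1: "integral {a..l+t} (\<lambda>u. h u (z u)) + integral {l+t..b} (\<lambda>u. h u (z u)) = integral {a..b} (\<lambda>u. h u (z u))"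
    by (rule Henstock_Kurzweil_Integration.integral_combine[OF a' _ hz]) (use b' lr in simp)
  have hz2: "(\<lambda>u. h u (z u)) integrable_on {l+t..b}"
    by (rule integrable_subinterval_real[OF hz]) (use a' in auto)
  have c2: "integral {l+t..r+t} (\<lambda>u. h u (z u)) + integral {r+t..b} (\<lambda>u. h u (z u)) = integral {l+t..b} (\<lambda>u. h u (z u))"
    by (rule Henstock_Kurzweil_Integration.integral_combine[OF _ b' hz2]) (use lr in simp)
  have c3: "integral {a..r+t} (\<lambda>u. h u (x r)) + integral {r+t..b} (\<lambda>u. h u (x r)) = integral {a..b} (\<lambda>u. h u (x r))"
    by (rule Henstock_Kurzweil_Integration.integral_combine[OF _ b' hr]) (use a' lr in simp)
  have e2: "integral {a..l+t} (\<lambda>u. h u (z u)) = integral {a..l+t} (\<lambda>u. h u (x l))"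
    by (rule integral_cong) (auto simp: z_def)
  have e3: "integral {r+t..b} (\<lambda>u. h u (z u)) = integral {r+t..b} (\<lambda>u. h u (x r))"
    by (rule integral_cong) (use lr in \<open>auto simp: z_def\<close>)
  have B: "integral {l+t..b} (\<lambda>u. h u (z u)) = integral {a..b} (\<lambda>u. h u (z u)) - integral {a..l+t} (\<lambda>u. h u (x l))"
    using c1 e2 by (simp add: eq_diff_eq add.commute)
  have E: "integral {l+t..r+t} (\<lambda>u. h u (z u)) = integral {l+t..b} (\<lambda>u. h u (z u)) - integral {r+t..b} (\<lambda>u. h u (x r))"
    using c2 e3 by (simp add: eq_diff_eq add.commute)
  have D: "integral {r+t..b} (\<lambda>u. h u (x r)) = integral {a..b} (\<lambda>u. h u (x r)) - integral {a..r+t} (\<lambda>u. h u (x r))"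
    using c3 by (simp add: eq_diff_eq add.commute)
  have "curve_int q (shift t h) x = integral {a..b} (\<lambda>u. h u (z u)) - integral {a..l+t} (\<lambda>u. h u (x l))
     - integral {a..b} (\<lambda>u. h u (x r)) + integral {a..r+t} (\<lambda>u. h u (x r))"
    unfolding e1 E B D by (simp add: algebra_simps)
  then show ?thesis by (simp add: z_def l_def r_def)
qed

lemma WTC_int:
  fixes h :: "real \<Rightarrow> 'a::euclidean_space \<Rightarrow> 'b::euclidean_space"
  assumes "h \<in> WTC \<Theta>" "mbound h (cball 0 (real j)) m" "a \<le> b" "continuous_on {a..b} y" "\<forall>u\<in>{a..b}. norm (y u) \<le> real j"
  shows "(\<lambda>u. h u (y u)) integrable_on {a..b}"
    and "norm (integral {a..b} (\<lambda>u. h u (y u))) \<le> integral {a..b} m"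
    and "m integrable_on {a..b}"
  using INT[OF WTC_C1[OF assms(1)] assms(2-5)] by auto

lemma curve_int_integral:
  fixes h :: "real \<Rightarrow> 'a::euclidean_space \<Rightarrow> 'b::euclidean_space"
  assumes "h \<in> WTC \<Theta>" "valid_ivl q" "x \<in> Kset \<Theta> q j"
  shows "curve_int q h x = integral (ivl q) (\<lambda>u. h u (x u))"
proof -
  obtain m where m: "mbound h (cball 0 (real j)) m" using WTC_mbound assms(1) by blast
  have c: "continuous_on {real_of_rat (fst q)..real_of_rat (snd q)} x"
    using Kset_cont[OF assms(3)] by (simp add: ivl_eq)
  have b: "\<forall>u\<in>{real_of_rat (fst q)..real_of_rat (snd q)}. norm (x u) \<le> real j"
    using Kset_bound[OF assms(3)] by (simp add: ivl_eq)
  show ?thesis using INT(3)[OF WTC_C1[OF assms(1)] m valid_le[OF assms(2)] c b]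
    by (simp add: curve_int_def ivl_eq)
qed

lemma condW_apply:
  assumes "h \<in> WTC \<Theta>" "valid_ivl q" "\<And>n. xs n \<in> Kset \<Theta> q j" "x \<in> Kset \<Theta> q j"
    "uniform_limit (ivl q) xs x sequentially"
  shows "(\<lambda>n. curve_int q h (xs n)) \<longlonglongrightarrow> curve_int q h x"
proof -
  have "condW \<Theta> h" using assms(1) by (simp add: WTC_def)
  then show ?thesis unfolding condW_def using assms(2-5) by blast
qed

lemma const_ulim:
  assumes "c \<longlonglongrightarrow> c0"
  shows "uniform_limit S (\<lambda>n _. c n) (\<lambda>_. c0) sequentially"
proof (rule uniform_limitI)
  fix e :: real assume "e > 0"
  then have "\<forall>\<^sub>F n in sequentially. dist (c n) c0 < e" using assms tendsto_iff by blast
  then show "\<forall>\<^sub>F n in sequentially. \<forall>x\<in>S. dist (c n) c0 < e" by (rule eventually_mono) auto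
qed

lemma CONSTCONV:
  fixes h :: "real \<Rightarrow> 'a::euclidean_space \<Rightarrow> 'b::euclidean_space"
  assumes s: "suitable_moduli \<Theta>" and h: "h \<in> WTC \<Theta>" and as: "real_of_rat a < s"
    and cn: "c \<longlonglongrightarrow> c0" and cb: "\<forall>n. norm (c n) \<le> real j" and c0b: "norm c0 \<le> real j"
  shows "(\<lambda>n. integral {real_of_rat a..s} (\<lambda>u. h u (c n))) \<longlonglongrightarrow> integral {real_of_rat a..s} (\<lambda>u. h u c0)"
proof (rule LIMSEQ_I)
  fix \<epsilon> :: real assume ep: "0 < \<epsilon>"
  define A where "A = real_of_rat a"
  obtain m where m: "mbound h (cball 0 (real j)) m" using WTC_mbound h by blast
  have mi: "m integrable_on {A..s+1}" using m unfolding mbound_def L1loc_def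
    using set_borel_integral_eq_integral(1) by blast
  have Fc: "continuous_on {A..s+1} (\<lambda>v. integral {A..v} m)"
    by (rule indefinite_integral_continuous_1[OF mi])
  have "s \<in> {A..s+1}" using as by (simp add: A_def)
  then obtain \<delta> where d: "\<delta> > 0" "\<forall>v\<in>{A..s+1}. dist v s < \<delta> \<longrightarrow> dist (integral {A..v} m) (integral {A..s} m) < \<epsilon>/3"
    using Fc ep unfolding continuous_on_iff by (metis divide_pos_pos zero_less_numeral)
  obtain \<rho> :: rat where rho: "max A (s - \<delta>) < real_of_rat \<rho>" "real_of_rat \<rho> < s"
    using of_rat_dense[of "max A (s - \<delta>)" s] d(1) as by (auto simp: A_def)
  define R where "R = real_of_rat \<rho>"
  have AR: "A < R" "R < s" "s - \<delta> < R" using rho by (auto simp: R_def)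
  have vq: "valid_ivl (a, \<rho>)" using AR by (simp add: valid_ivl_def A_def R_def of_rat_less)
  have ivq: "ivl (a, \<rho>) = {A..R}" by (simp add: ivl_eq A_def R_def)
  have close: "norm (integral {A..s} (\<lambda>u. h u c') - integral {A..R} (\<lambda>u. h u c')) < \<epsilon>/3"
    if c': "norm c' \<le> real j" for c'
  proof -
    have i1: "(\<lambda>u. h u c') integrable_on {A..s}"
      by (rule WTC_int(1)[OF h m]) (use AR c' in auto)
    have "integral {A..R} (\<lambda>u. h u c') + integral {R..s} (\<lambda>u. h u c') = integral {A..s} (\<lambda>u. h u c')"
      by (rule Henstock_Kurzweil_Integration.integral_combine[OF _ _ i1]) (use AR in auto)
    then have "integral {A..s} (\<lambda>u. h u c') - integral {A..R} (\<lambda>u. h u c') = integral {R..s} (\<lambda>u. h u c')"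
      by (simp add: algebra_simps)
    moreover have "norm (integral {R..s} (\<lambda>u. h u c')) \<le> integral {R..s} m"
      by (rule WTC_int(2)[OF h m]) (use AR c' in auto)
    moreover have "integral {A..R} m + integral {R..s} m = integral {A..s} m"
      by (rule Henstock_Kurzweil_Integration.integral_combine)
         (use AR in \<open>auto intro: integrable_subinterval_real[OF mi]\<close>)
    moreover have "dist (integral {A..R} m) (integral {A..s} m) < \<epsilon>/3"
      using d(2) AR by (auto simp: dist_real_def)
    ultimately show ?thesis by (simp add: dist_real_def) (smt (verit))
  qed
  have Kc: "\<And>n. (\<lambda>_. c n) \<in> Kset \<Theta> (a, \<rho>) j" using const_Kset[OF s vq] cb by blast
  have Kc0: "(\<lambda>_. c0) \<in> Kset \<Theta> (a, \<rho>) j" using const_Kset[OF s vq] c0b by blast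
  have "(\<lambda>n. curve_int (a, \<rho>) h (\<lambda>_. c n)) \<longlonglongrightarrow> curve_int (a, \<rho>) h (\<lambda>_. c0)"
    by (rule condW_apply[OF h vq Kc Kc0 const_ulim[OF cn]])
  then have "(\<lambda>n. integral {A..R} (\<lambda>u. h u (c n))) \<longlonglongrightarrow> integral {A..R} (\<lambda>u. h u c0)"
    using curve_int_integral[OF h vq Kc] curve_int_integral[OF h vq Kc0] ivq by simp
  then obtain N where N: "\<forall>n\<ge>N. norm (integral {A..R} (\<lambda>u. h u (c n)) - integral {A..R} (\<lambda>u. h u c0)) < \<epsilon>/3"
    using LIMSEQ_D ep by (metis divide_pos_pos zero_less_numeral)
  show "\<exists>no. \<forall>n\<ge>no. norm (integral {real_of_rat a..s} (\<lambda>u. h u (c n)) - integral {real_of_rat a..s} (\<lambda>u. h u c0)) < \<epsilon>"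
  proof (intro exI allI impI)
    fix n assume "N \<le> n"
    have "norm (integral {A..s} (\<lambda>u. h u (c n)) - integral {A..s} (\<lambda>u. h u c0))
      \<le> norm (integral {A..s} (\<lambda>u. h u (c n)) - integral {A..R} (\<lambda>u. h u (c n)))
       + norm (integral {A..R} (\<lambda>u. h u (c n)) - integral {A..R} (\<lambda>u. h u c0))
       + norm (integral {A..s} (\<lambda>u. h u c0) - integral {A..R} (\<lambda>u. h u c0))"
      by (smt (verit) norm_diff_triangle_ineq norm_minus_commute norm_triangle_ineq4 diff_add_cancel add_diff_cancel)
    also have "\<dots> < \<epsilon>/3 + \<epsilon>/3 + \<epsilon>/3"
      using close[OF cb[rule_format, of n]] close[OF c0b] N \<open>N \<le> n\<close> by (intro add_strict_mono) auto
    finally show "norm (integral {real_of_rat a..s} (\<lambda>u. h u (c n)) - integral {real_of_rat a..s} (\<lambda>u. h u c0)) < \<epsilon>"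
      by (simp add: A_def)
  qed
qed

lemma ulim_compose:
  assumes "uniform_limit S f g F" "\<And>u. u \<in> T \<Longrightarrow> p u \<in> S"
  shows "uniform_limit T (\<lambda>n u. f n (p u)) (\<lambda>u. g (p u)) F"
proof (rule uniform_limitI)
  fix e :: real assume "e > 0"
  then have "\<forall>\<^sub>F n in F. \<forall>x\<in>S. dist (f n x) (g x) < e" using assms(1) uniform_limitD by blast
  then show "\<forall>\<^sub>F n in F. \<forall>u\<in>T. dist (f n (p u)) (g (p u)) < e"
    by (rule eventually_mono) (use assms(2) in auto)
qed

lemma shift_condW:
  fixes h :: "real \<Rightarrow> 'a::euclidean_space \<Rightarrow> 'b::euclidean_space"
  assumes s: "suitable_moduli \<Theta>" and h: "h \<in> WTC \<Theta>"
  shows "condW \<Theta> (shift t h)"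
  unfolding condW_def
proof (intro allI impI, elim conjE)
  fix q :: "rat \<times> rat" and j :: nat and xs :: "nat \<Rightarrow> real \<Rightarrow> 'a" and x :: "real \<Rightarrow> 'a"
  assume vq: "valid_ivl q" and xs: "\<forall>n. xs n \<in> Kset \<Theta> q j" and x: "x \<in> Kset \<Theta> q j"
    and ul: "uniform_limit (ivl q) xs x sequentially"
  define l where "l = real_of_rat (fst q)"
  define r where "r = real_of_rat (snd q)"
  have lr: "l \<le> r" using valid_le[OF vq] by (simp add: l_def r_def)
  have iq: "ivl q = {l..r}" by (simp add: ivl_eq l_def r_def)
  obtain a :: rat where a: "min l (l + t) - 2 < real_of_rat a" "real_of_rat a < min l (l + t) - 1"
    using of_rat_dense[of "min l (l + t) - 2" "min l (l + t) - 1"] by auto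
  obtain b :: rat where b: "max r (r + t) + 1 < real_of_rat b" "real_of_rat b < max r (r + t) + 2"
    using of_rat_dense[of "max r (r + t) + 1" "max r (r + t) + 2"] by auto
  define A where "A = real_of_rat a"
  define B where "B = real_of_rat b"
  have AB: "A < l" "A < l + t" "r < B" "r + t < B" "A < B" using a b lr by (auto simp: A_def B_def)
  have vJ: "valid_ivl (a, b)" using AB by (simp add: valid_ivl_def A_def B_def of_rat_less)
  have iJ: "ivl (a, b) = {A..B}" by (simp add: ivl_eq A_def B_def)
  have sub: "ivl q \<subseteq> ivl (a, b)" using AB iq iJ by auto
  have hC1: "C1 h" and hC2: "C2 h" using h by (auto simp: WTC_def)
  have dec: "\<And>y. y \<in> Kset \<Theta> q j \<Longrightarrow> curve_int q (shift t h) y =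
    integral {A..B} (\<lambda>u. h u (y (max l (min r (u - t)))))
    - integral {A..l + t} (\<lambda>u. h u (y l))
    - integral {A..B} (\<lambda>u. h u (y r))
    + integral {A..r + t} (\<lambda>u. h u (y r))"
    using DECOMP[OF hC1 hC2 vq, of _ \<Theta> j A t B] AB unfolding l_def r_def by auto
  have zK: "\<And>y. y \<in> Kset \<Theta> q j \<Longrightarrow> (\<lambda>u. y (max l (min r (u - t)))) \<in> Kset \<Theta> (a, b) j"
    using zK[OF s vq vJ sub] unfolding l_def r_def by blast
  have T1: "(\<lambda>n. integral {A..B} (\<lambda>u. h u (xs n (max l (min r (u - t)))))) \<longlonglongrightarrow> integral {A..B} (\<lambda>u. h u (x (max l (min r (u - t)))))"
  proof -
    have ul2: "uniform_limit (ivl (a, b)) (\<lambda>n u. xs n (max l (min r (u - t)))) (\<lambda>u. x (max l (min r (u - t)))) sequentially"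
      by (rule ulim_compose[OF ul]) (use clamp_in[OF lr] iq in auto)
    have "(\<lambda>n. curve_int (a, b) h (\<lambda>u. xs n (max l (min r (u - t))))) \<longlonglongrightarrow> curve_int (a, b) h (\<lambda>u. x (max l (min r (u - t))))"
      by (rule condW_apply[OF h vJ _ _ ul2]) (use zK xs x in auto)
    then show ?thesis
      using curve_int_integral[OF h vJ zK[OF x]] curve_int_integral[OF h vJ zK[OF xs[rule_format]]] iJ by simp
  qed
  have ptw: "\<And>u. u \<in> {l..r} \<Longrightarrow> (\<lambda>n. xs n u) \<longlonglongrightarrow> x u"
    using tendsto_uniform_limitI[OF ul] iq by auto
  have xsb: "\<And>n u. u \<in> {l..r} \<Longrightarrow> norm (xs n u) \<le> real j" using Kset_bound xs iq by blast
  have xb: "\<And>u. u \<in> {l..r} \<Longrightarrow> norm (x u) \<le> real j" using Kset_bound x iq by blast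
  have lin: "l \<in> {l..r}" and rin: "r \<in> {l..r}" using lr by auto
  have T2: "(\<lambda>n. integral {A..l + t} (\<lambda>u. h u (xs n l))) \<longlonglongrightarrow> integral {A..l + t} (\<lambda>u. h u (x l))"
    using CONSTCONV[OF s h _ ptw[OF lin], of a "l + t" j] AB xsb[OF lin] xb[OF lin] by (simp add: A_def)
  have T3: "(\<lambda>n. integral {A..B} (\<lambda>u. h u (xs n r))) \<longlonglongrightarrow> integral {A..B} (\<lambda>u. h u (x r))"
    using CONSTCONV[OF s h _ ptw[OF rin], of a B j] AB xsb[OF rin] xb[OF rin] lr by (simp add: A_def)
  have T4: "(\<lambda>n. integral {A..r + t} (\<lambda>u. h u (xs n r))) \<longlonglongrightarrow> integral {A..r + t} (\<lambda>u. h u (x r))"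
    using CONSTCONV[OF s h _ ptw[OF rin], of a "r + t" j] AB xsb[OF rin] xb[OF rin] lr by (simp add: A_def)
  have "(\<lambda>n. integral {A..B} (\<lambda>u. h u (xs n (max l (min r (u - t)))))
    - integral {A..l + t} (\<lambda>u. h u (xs n l))
    - integral {A..B} (\<lambda>u. h u (xs n r))
    + integral {A..r + t} (\<lambda>u. h u (xs n r))) \<longlonglongrightarrow>
    integral {A..B} (\<lambda>u. h u (x (max l (min r (u - t)))))
    - integral {A..l + t} (\<lambda>u. h u (x l))
    - integral {A..B} (\<lambda>u. h u (x r))
    + integral {A..r + t} (\<lambda>u. h u (x r))"
    by (intro tendsto_intros T1 T2 T3 T4)
  then show "(\<lambda>n. curve_int q (shift t h) (xs n)) \<longlonglongrightarrow> curve_int q (shift t h) x"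
    using dec[OF x] dec[OF xs[rule_format]] by simp
qed

lemma SHIFT_WTC:
  assumes s: "suitable_moduli \<Theta>" and h: "h \<in> WTC \<Theta>"
  shows "shift t h \<in> WTC \<Theta>"
  using shift_C1 shift_C2 shift_condW[OF s h] h unfolding WTC_def by blast

lemma tri2: fixes a b c :: "'a::real_normed_vector" shows "norm (a - b) \<le> norm (c - a) + norm (c - b)"
proof -
  have "a - b = (c - b) - (c - a)" by (simp add: algebra_simps)
  then show ?thesis by (metis norm_triangle_ineq4 add.commute)
qed

lemma tri3: fixes a b c d :: "'a::real_normed_vector" shows "norm (a - b) \<le> norm (c - d) + norm (d - b) + norm (c - a)"
proof -
  have "a - b = ((c - d) + (d - b)) - (c - a)" by (simp add: algebra_simps)
  then have "norm (a - b) \<le> norm ((c - d) + (d - b)) + norm (c - a)" by (metis norm_triangle_ineq4)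
  also have "\<dots> \<le> norm (c - d) + norm (d - b) + norm (c - a)" by (rule add_right_mono[OF norm_triangle_ineq])
  finally show ?thesis .
qed

lemma theta_small:
  assumes s: "suitable_moduli \<Theta>" and vq: "valid_ivl q" and e: "e > 0"
  obtains d where "d > 0" "\<And>r. 0 \<le> r \<Longrightarrow> r < d \<Longrightarrow> \<Theta> q j r < e"
proof -
  have c: "continuous_on {0..} (\<Theta> q j)" and z: "\<Theta> q j 0 = 0"
    using s vq unfolding suitable_moduli_def by blast+
  obtain d where d: "d > 0" "\<forall>r\<in>{0..}. dist r 0 < d \<longrightarrow> dist (\<Theta> q j r) (\<Theta> q j 0) < e"
    using c e unfolding continuous_on_iff by (metis atLeast_iff order_refl)
  show ?thesis
  proof (rule that[OF d(1)])
    fix r :: real assume "0 \<le> r" "r < d"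
    then have "dist (\<Theta> q j r) 0 < e" using d(2) z by auto
    then show "\<Theta> q j r < e" by (simp add: dist_real_def)
  qed
qed

lemma UC:
  fixes h :: "real \<Rightarrow> 'a::euclidean_space \<Rightarrow> 'b::euclidean_space"
  assumes s: "suitable_moduli \<Theta>" and h: "h \<in> WTC \<Theta>" and vq: "valid_ivl q" and ep: "\<epsilon> > 0"
  shows "\<exists>\<eta>>0. \<forall>x\<in>Kset \<Theta> q j. \<forall>y\<in>Kset \<Theta> q j. (\<forall>u\<in>ivl q. norm (x u - y u) \<le> \<eta>) \<longrightarrow>
            norm (curve_int q h x - curve_int q h y) < \<epsilon>"
proof (rule ccontr)
  assume "\<not> ?thesis"
  then have "\<forall>n::nat. \<exists>x\<in>Kset \<Theta> q j. \<exists>y\<in>Kset \<Theta> q j. (\<forall>u\<in>ivl q. norm (x u - y u) \<le> inverse (real (Suc n))) \<and>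
            \<epsilon> \<le> norm (curve_int q h x - curve_int q h y)"
    by (metis inverse_positive_iff_positive of_nat_0_less_iff zero_less_Suc not_less)
  then obtain X Y where XY: "\<And>n. X n \<in> Kset \<Theta> q j" "\<And>n. Y n \<in> Kset \<Theta> q j"
    "\<And>n. \<forall>u\<in>ivl q. norm (X n u - Y n u) \<le> inverse (real (Suc n))"
    "\<And>n. \<epsilon> \<le> norm (curve_int q h (X n) - curve_int q h (Y n))"
    by metis
  have cS: "compact (ivl q)" by (simp add: ivl_eq)
  obtain g k where g: "continuous_on (ivl q) g" "strict_mono (k :: nat \<Rightarrow> nat)"
    "\<And>e. 0 < e \<Longrightarrow> \<exists>N. \<forall>n x. n \<ge> N \<and> x \<in> ivl q \<longrightarrow> norm (X (k n) x - g x) < e"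
  proof (rule Arzela_Ascoli[OF cS, of X "real j"])
    show "\<And>n x. x \<in> ivl q \<Longrightarrow> norm (X n x) \<le> real j" using Kset_bound XY(1) by blast
    fix x e assume x: "x \<in> ivl q" and e: "(0::real) < e"
    obtain d where d: "d > 0" "\<And>r. 0 \<le> r \<Longrightarrow> r < d \<Longrightarrow> \<Theta> q j r < e"
      using theta_small[OF s vq e] by blast
    show "\<exists>d>0. \<forall>n y. y \<in> ivl q \<and> norm (x - y) < d \<longrightarrow> norm (X n x - X n y) < e"
    proof (intro exI[of _ d] conjI allI impI)
      fix n y assume yy: "y \<in> ivl q \<and> norm (x - y) < d"
      then have "norm (X n x - X n y) \<le> \<Theta> q j \<bar>x - y\<bar>" "\<Theta> q j \<bar>x - y\<bar> < e"
        using Kset_mod[OF XY(1)[of n] _ x, of y] d(2)[of "\<bar>x - y\<bar>"] by auto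
      then show "norm (X n x - X n y) < e" by simp
    qed (use d in auto)
  qed blast
  have gK: "g \<in> Kset \<Theta> q j"
    unfolding Kset_def
  proof (intro CollectI conjI ballI)
    show "continuous_on (ivl q) g" by (rule g(1))
    fix u assume u: "u \<in> ivl q"
    show "norm (g u) \<le> real j"
    proof (rule field_le_epsilon)
      fix e :: real assume "e > 0"
      then obtain N where "\<forall>n x. n \<ge> N \<and> x \<in> ivl q \<longrightarrow> norm (X (k n) x - g x) < e" using g(3) by blast
      then have "norm (X (k N) u - g u) < e" using u by blast
      moreover have "norm (X (k N) u) \<le> real j" using Kset_bound[OF XY(1) u] .
      ultimately show "norm (g u) \<le> real j + e" using norm_triangle_sub[of "g u" "X (k N) u"]
        by (simp add: norm_minus_commute)
    qed
  next
    fix u v assume u: "u \<in> ivl q" and v: "v \<in> ivl q"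
    show "norm (g v - g u) \<le> \<Theta> q j \<bar>v - u\<bar>"
    proof (rule field_le_epsilon)
      fix e :: real assume "e > 0"
      then obtain N where "\<forall>n x. n \<ge> N \<and> x \<in> ivl q \<longrightarrow> norm (X (k n) x - g x) < e/2"
        using g(3) by (metis half_gt_zero)
      then have 1: "norm (X (k N) u - g u) < e/2" "norm (X (k N) v - g v) < e/2" using u v by blast+
      have 2: "norm (X (k N) v - X (k N) u) \<le> \<Theta> q j \<bar>v - u\<bar>" using Kset_mod[OF XY(1) u v] .
      have "norm (g v - g u) \<le> norm (X (k N) v - X (k N) u) + norm (X (k N) u - g u) + norm (X (k N) v - g v)"
        by (rule tri3)
      then show "norm (g v - g u) \<le> \<Theta> q j \<bar>v - u\<bar> + e" using 1 2 by linarith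
    qed
  qed
  have ulX: "uniform_limit (ivl q) (\<lambda>n. X (k n)) g sequentially"
  proof (rule uniform_limitI)
    fix e :: real assume "e > 0"
    then obtain N where "\<forall>n x. n \<ge> N \<and> x \<in> ivl q \<longrightarrow> norm (X (k n) x - g x) < e" using g(3) by blast
    then show "\<forall>\<^sub>F n in sequentially. \<forall>x\<in>ivl q. dist (X (k n) x) (g x) < e"
      by (intro eventually_sequentiallyI[of N]) (auto simp: dist_norm)
  qed
  have ulY: "uniform_limit (ivl q) (\<lambda>n. Y (k n)) g sequentially"
  proof (rule uniform_limitI)
    fix e :: real assume e: "e > 0"
    then obtain N where N: "\<forall>n x. n \<ge> N \<and> x \<in> ivl q \<longrightarrow> norm (X (k n) x - g x) < e/2"
      using g(3) by (metis half_gt_zero)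
    obtain M where M: "inverse (real (Suc M)) < e/2" using reals_Archimedean[of "e/2"] e by auto
    show "\<forall>\<^sub>F n in sequentially. \<forall>x\<in>ivl q. dist (Y (k n) x) (g x) < e"
    proof (intro eventually_sequentiallyI[of "max N M"] ballI)
      fix n x assume n: "max N M \<le> n" and x: "x \<in> ivl q"
      have "M \<le> k n" using n seq_suble[OF g(2), of n] by simp
      then have "inverse (real (Suc (k n))) \<le> inverse (real (Suc M))"
        by (simp add: le_imp_inverse_le)
      moreover have "norm (X (k n) x - Y (k n) x) \<le> inverse (real (Suc (k n)))" using XY(3)[of "k n"] x by blast
      ultimately have 1: "norm (X (k n) x - Y (k n) x) < e/2" using M by linarith
      have 2: "norm (X (k n) x - g x) < e/2" using N n x by auto
      have "norm (Y (k n) x - g x) \<le> norm (X (k n) x - Y (k n) x) + norm (X (k n) x - g x)"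
        by (rule tri2)
      then show "dist (Y (k n) x) (g x) < e" using 1 2 by (simp add: dist_norm)
    qed
  qed
  have tX: "(\<lambda>n. curve_int q h (X (k n))) \<longlonglongrightarrow> curve_int q h g"
    by (rule condW_apply[OF h vq XY(1) gK ulX])
  have tY: "(\<lambda>n. curve_int q h (Y (k n))) \<longlonglongrightarrow> curve_int q h g"
    by (rule condW_apply[OF h vq XY(2) gK ulY])
  have "(\<lambda>n. curve_int q h (X (k n)) - curve_int q h (Y (k n))) \<longlonglongrightarrow> curve_int q h g - curve_int q h g"
    by (rule tendsto_diff[OF tX tY])
  then obtain N where "\<forall>n\<ge>N. norm (curve_int q h (X (k n)) - curve_int q h (Y (k n))) < \<epsilon>"
    using LIMSEQ_D[OF _ ep] by fastforce
  then show False using XY(4)[of "k N"] by fastforce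
qed

lemma nb_self:
  assumes s: "suitable_moduli \<Theta>" "f \<in> WTC \<Theta>" "F \<subseteq> {(q,j). valid_ivl q}" "e > 0"
  shows "f \<in> nb \<Theta> F e f"
  unfolding nb_def using assms pIj_self[OF s(1,2)] by auto

lemma ball_open:
  fixes f :: "real \<Rightarrow> 'a::euclidean_space \<Rightarrow> 'b::euclidean_space"
  assumes s: "suitable_moduli \<Theta>" and f: "f \<in> WTC \<Theta>" and F: "finite F" "F \<subseteq> {(q,j). valid_ivl q}"
  shows "openin (sigma_top \<Theta>) (nb \<Theta> F e f)"
  unfolding openin_sigma sigopen_def
proof (intro conjI ballI)
  show "nb \<Theta> F e f \<subseteq> WTC \<Theta>" by (auto simp: nb_def)
  fix g assume g: "g \<in> nb \<Theta> F e f"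
  have gW: "g \<in> WTC \<Theta>" using g by (simp add: nb_def)
  define D where "D = (\<lambda>(q,j). e - pIj \<Theta> q j (\<lambda>t x. g t x - f t x)) ` F"
  define d where "d = (if F = {} then 1 else Min D)"
  have dpos: "d > 0"
  proof (cases "F = {}")
    case False
    then have "finite D" "D \<noteq> {}" using F by (auto simp: D_def)
    moreover have "\<forall>a\<in>D. 0 < a" using g by (auto simp: D_def nb_def)
    ultimately show ?thesis using False by (simp add: d_def)
  qed (simp add: d_def)
  have dle: "d \<le> e - pIj \<Theta> q j (\<lambda>t x. g t x - f t x)" if "(q,j) \<in> F" for q j
  proof -
    have "F \<noteq> {}" using that by auto
    moreover have "e - pIj \<Theta> q j (\<lambda>t x. g t x - f t x) \<in> D" using that by (force simp: D_def)
    moreover have "finite D" using F by (simp add: D_def)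
    ultimately show ?thesis by (simp add: d_def)
  qed
  have "nb \<Theta> F d g \<subseteq> nb \<Theta> F e f"
  proof
    fix g' assume g': "g' \<in> nb \<Theta> F d g"
    have g'W: "g' \<in> WTC \<Theta>" using g' by (simp add: nb_def)
    have "pIj \<Theta> q j (\<lambda>t x. g' t x - f t x) < e" if qj: "(q,j) \<in> F" for q j
    proof -
      have vq: "valid_ivl q" using qj F by auto
      have "pIj \<Theta> q j (\<lambda>t x. g' t x - f t x) \<le> pIj \<Theta> q j (\<lambda>t x. g' t x - g t x) + pIj \<Theta> q j (\<lambda>t x. g t x - f t x)"
        by (rule pIj_tri[OF s f g'W gW vq])
      moreover have "pIj \<Theta> q j (\<lambda>t x. g' t x - g t x) < d" using g' qj by (auto simp: nb_def)
      ultimately show ?thesis using dle[OF qj] by linarith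
    qed
    then show "g' \<in> nb \<Theta> F e f" using g'W by (auto simp: nb_def)
  qed
  then show "\<exists>F' e'. finite F' \<and> F' \<subseteq> {(q,j). valid_ivl q} \<and> e' > 0 \<and> nb \<Theta> F' e' g \<subseteq> nb \<Theta> F e f"
    using F dpos by blast
qed

lemma BND:
  fixes h :: "real \<Rightarrow> 'a::euclidean_space \<Rightarrow> 'b::euclidean_space"
  assumes h: "h \<in> WTC \<Theta>" and m: "mbound h (cball 0 (real j)) m"
    and y: "continuous_on {L..R} y" "\<forall>u\<in>{L..R}. norm (y u) \<le> real j"
    and v: "v \<in> {L..R}" "v' \<in> {L..R}"
  shows "norm (integral {L..v} (\<lambda>u. h u (y u)) - integral {L..v'} (\<lambda>u. h u (y u))) \<le> \<bar>integral {L..v} m - integral {L..v'} m\<bar>"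
proof -
  have LR: "L \<le> R" using v by auto
  have hi: "(\<lambda>u. h u (y u)) integrable_on {L..R}" using WTC_int(1)[OF h m LR y] .
  have mi: "m integrable_on {L..R}" using WTC_int(3)[OF h m LR y] .
  have key: "norm (integral {L..b} (\<lambda>u. h u (y u)) - integral {L..a} (\<lambda>u. h u (y u))) \<le> integral {L..b} m - integral {L..a} m"
    if ab: "a \<le> b" "a \<in> {L..R}" "b \<in> {L..R}" for a b
  proof -
    have hb: "(\<lambda>u. h u (y u)) integrable_on {L..b}" by (rule integrable_subinterval_real[OF hi]) (use ab in auto)
    have mb: "m integrable_on {L..b}" by (rule integrable_subinterval_real[OF mi]) (use ab in auto)
    have 1: "integral {L..a} (\<lambda>u. h u (y u)) + integral {a..b} (\<lambda>u. h u (y u)) = integral {L..b} (\<lambda>u. h u (y u))"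
      by (rule Henstock_Kurzweil_Integration.integral_combine[OF _ _ hb]) (use ab in auto)
    have 2: "integral {L..a} m + integral {a..b} m = integral {L..b} m"
      by (rule Henstock_Kurzweil_Integration.integral_combine[OF _ _ mb]) (use ab in auto)
    have 3: "norm (integral {a..b} (\<lambda>u. h u (y u))) \<le> integral {a..b} m"
      by (rule WTC_int(2)[OF h m]) (use ab y continuous_on_subset[OF y(1), of "{a..b}"] in auto)
    show ?thesis using 1 2 3 by (simp add: algebra_simps flip: 1 2)
  qed
  show ?thesis
  proof (cases "v' \<le> v")
    case True
    then show ?thesis using key[OF True v(2) v(1)] by linarith
  next
    case False
    then have "norm (integral {L..v'} (\<lambda>u. h u (y u)) - integral {L..v} (\<lambda>u. h u (y u))) \<le> integral {L..v'} m - integral {L..v} m"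
      using key[of v v'] v by auto
    then show ?thesis by (simp add: norm_minus_commute)
  qed
qed

lemma m_integrable: "mbound h K m \<Longrightarrow> m integrable_on {a..b}"
  unfolding mbound_def L1loc_def using set_borel_integral_eq_integral(1) by blast

lemma TRANS:
  fixes h :: "real \<Rightarrow> 'a::euclidean_space \<Rightarrow> 'b::euclidean_space"
  assumes s: "suitable_moduli \<Theta>" and h: "h \<in> WTC \<Theta>" and vq: "valid_ivl q" and ep: "\<epsilon> > 0"
  shows "\<exists>\<delta>>0. \<forall>\<tau>. \<bar>\<tau>\<bar> < \<delta> \<longrightarrow> (\<forall>x\<in>Kset \<Theta> q j. norm (curve_int q (shift \<tau> h) x - curve_int q h x) \<le> \<epsilon>)"
proof -
  define l where "l = real_of_rat (fst q)"
  define r where "r = real_of_rat (snd q)"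
  have lr: "l \<le> r" using valid_le[OF vq] by (simp add: l_def r_def)
  have iq: "ivl q = {l..r}" by (simp add: ivl_eq l_def r_def)
  obtain m where m: "mbound h (cball 0 (real j)) m" using WTC_mbound h by blast
  define L where "L = l - 1"
  define R where "R = r + 1"
  have mi: "m integrable_on {L..R}" using m_integrable[OF m] .
  have "uniformly_continuous_on {L..R} (\<lambda>v. integral {L..v} m)"
    by (rule compact_uniformly_continuous[OF indefinite_integral_continuous_1[OF mi]]) simp
  then obtain d3 where d3: "d3 > 0" "\<forall>v\<in>{L..R}. \<forall>v'\<in>{L..R}. dist v' v < d3 \<longrightarrow> dist (integral {L..v'} m) (integral {L..v} m) < \<epsilon>/4"
    unfolding uniformly_continuous_on_def using ep by (metis divide_pos_pos zero_less_numeral)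
  obtain \<eta> where eta: "\<eta> > 0" "\<forall>x\<in>Kset \<Theta> q j. \<forall>y\<in>Kset \<Theta> q j. (\<forall>u\<in>ivl q. norm (x u - y u) \<le> \<eta>) \<longrightarrow>
            norm (curve_int q h x - curve_int q h y) < \<epsilon>/2"
    using UC[OF s h vq, of "\<epsilon>/2" j] ep by auto
  obtain d2 where d2: "d2 > 0" "\<And>r. 0 \<le> r \<Longrightarrow> r < d2 \<Longrightarrow> \<Theta> q j r < \<eta>"
    using theta_small[OF s vq eta(1)] by blast
  have hC1: "C1 h" and hC2: "C2 h" using h by (auto simp: WTC_def)
  show ?thesis
  proof (intro exI[of _ "min 1 (min d2 d3)"] conjI allI impI ballI)
    show "0 < min 1 (min d2 d3)" using d2 d3 by simp
    fix \<tau> :: real and x :: "real \<Rightarrow> 'a" assume tau: "\<bar>\<tau>\<bar> < min 1 (min d2 d3)" and x: "x \<in> Kset \<Theta> q j"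
    define w where "w = (\<lambda>u. x (max l (min r (u - \<tau>))))"
    have wK: "w \<in> Kset \<Theta> q j" using zK[OF s vq vq subset_refl x, of \<tau>] by (simp add: w_def l_def r_def)
    have xc: "continuous_on {l..r} x" using Kset_cont[OF x] iq by simp
    have xb: "\<forall>u\<in>{l..r}. norm (x u) \<le> real j" using Kset_bound[OF x] iq by simp
    have wc: "continuous_on UNIV w" unfolding w_def by (rule clamp_curve_cont[OF lr xc])
    have wcL: "continuous_on {L..R} w" using continuous_on_subset[OF wc] by blast
    have wb: "\<forall>u\<in>{L..R}. norm (w u) \<le> real j" using xb clamp_in[OF lr] unfolding w_def by blast
    have "curve_int q (shift \<tau> h) x = integral {l+\<tau>..r+\<tau>} (\<lambda>u. h u (w u))
       - integral {l+\<tau>..l+\<tau>} (\<lambda>u. h u (x l)) - integral {l+\<tau>..r+\<tau>} (\<lambda>u. h u (x r))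
       + integral {l+\<tau>..r+\<tau>} (\<lambda>u. h u (x r))"
      using DECOMP[OF hC1 hC2 vq x, of "l+\<tau>" \<tau> "r+\<tau>"] by (simp add: w_def l_def r_def)
    then have e1: "curve_int q (shift \<tau> h) x = integral {l+\<tau>..r+\<tau>} (\<lambda>u. h u (w u))" by simp
    have e2: "curve_int q h w = integral {l..r} (\<lambda>u. h u (w u))"
      using curve_int_integral[OF h vq wK] iq by simp
    define G where "G = (\<lambda>v. integral {L..v} (\<lambda>u. h u (w u)))"
    define Fm where "Fm = (\<lambda>v. integral {L..v} m)"
    have hwi: "(\<lambda>u. h u (w u)) integrable_on {L..R}"
      by (rule WTC_int(1)[OF h m _ wcL wb]) (use lr in \<open>simp add: L_def R_def\<close>)
    have split: "integral {a..b} (\<lambda>u. h u (w u)) = G b - G a" if "L \<le> a" "a \<le> b" "b \<le> R" for a b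
    proof -
      have "integral {L..a} (\<lambda>u. h u (w u)) + integral {a..b} (\<lambda>u. h u (w u)) = integral {L..b} (\<lambda>u. h u (w u))"
        by (rule Henstock_Kurzweil_Integration.integral_combine[OF that(1,2)])
           (rule integrable_subinterval_real[OF hwi], use that in auto)
      then show ?thesis by (simp add: G_def algebra_simps)
    qed
    have t1: "\<bar>\<tau>\<bar> < 1" "\<bar>\<tau>\<bar> < d2" "\<bar>\<tau>\<bar> < d3" using tau by auto
    have pts: "l \<in> {L..R}" "r \<in> {L..R}" "l + \<tau> \<in> {L..R}" "r + \<tau> \<in> {L..R}"
      using t1(1) lr by (auto simp: L_def R_def)
    have b1: "norm (G (r+\<tau>) - G r) < \<epsilon>/4"
    proof -
      have "norm (G (r+\<tau>) - G r) \<le> \<bar>Fm (r+\<tau>) - Fm r\<bar>"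
        unfolding G_def Fm_def by (rule BND[OF h m wcL wb pts(4) pts(2)])
      moreover have "dist (Fm (r+\<tau>)) (Fm r) < \<epsilon>/4"
        using d3(2) pts t1 unfolding Fm_def by (auto simp: dist_real_def)
      ultimately show ?thesis by (simp add: dist_real_def)
    qed
    have b2: "norm (G (l+\<tau>) - G l) < \<epsilon>/4"
    proof -
      have "norm (G (l+\<tau>) - G l) \<le> \<bar>Fm (l+\<tau>) - Fm l\<bar>"
        unfolding G_def Fm_def by (rule BND[OF h m wcL wb pts(3) pts(1)])
      moreover have "dist (Fm (l+\<tau>)) (Fm l) < \<epsilon>/4"
        using d3(2) pts t1 unfolding Fm_def by (auto simp: dist_real_def)
      ultimately show ?thesis by (simp add: dist_real_def)
    qed
    have i1: "integral {l+\<tau>..r+\<tau>} (\<lambda>u. h u (w u)) = G (r+\<tau>) - G (l+\<tau>)"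
      by (rule split) (use pts lr in auto)
    have i2: "integral {l..r} (\<lambda>u. h u (w u)) = G r - G l"
      by (rule split) (use pts lr in auto)
    have close: "\<forall>u\<in>ivl q. norm (w u - x u) \<le> \<eta>"
    proof
      fix u assume u: "u \<in> ivl q"
      have cu: "max l (min r (u - \<tau>)) \<in> ivl q" using clamp_in[OF lr] iq by auto
      have "norm (w u - x u) \<le> \<Theta> q j \<bar>max l (min r (u - \<tau>)) - u\<bar>"
        unfolding w_def by (rule Kset_mod[OF x u cu])
      also have "\<dots> \<le> \<Theta> q j \<bar>\<tau>\<bar>"
      proof (rule suitable_mono[OF s vq])
        have "u = max l (min r u)" using u iq by auto
        then show "\<bar>max l (min r (u - \<tau>)) - u\<bar> \<le> \<bar>\<tau>\<bar>"
          using clamp_lip[of l r "u - \<tau>" u] by simp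
      qed auto
      also have "\<dots> < \<eta>" using d2(2)[of "\<bar>\<tau>\<bar>"] t1 by simp
      finally show "norm (w u - x u) \<le> \<eta>" by simp
    qed
    have b3: "norm (curve_int q h w - curve_int q h x) < \<epsilon>/2"
      using eta(2) wK x close by blast
    have "curve_int q (shift \<tau> h) x - curve_int q h x
      = ((G (r+\<tau>) - G r) - (G (l+\<tau>) - G l)) + (curve_int q h w - curve_int q h x)"
      using e1 e2 i1 i2 by (simp add: algebra_simps)
    then have "norm (curve_int q (shift \<tau> h) x - curve_int q h x)
      = norm (((G (r+\<tau>) - G r) - (G (l+\<tau>) - G l)) + (curve_int q h w - curve_int q h x))" by (simp only:)
    also have "\<dots> \<le> norm ((G (r+\<tau>) - G r) - (G (l+\<tau>) - G l)) + norm (curve_int q h w - curve_int q h x)"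
      by (rule norm_triangle_ineq)
    also have "\<dots> \<le> norm (G (r+\<tau>) - G r) + norm (G (l+\<tau>) - G l) + norm (curve_int q h w - curve_int q h x)"
      by (rule add_right_mono[OF norm_triangle_ineq4])
    finally have "norm (curve_int q (shift \<tau> h) x - curve_int q h x)
      \<le> norm (G (r+\<tau>) - G r) + norm (G (l+\<tau>) - G l) + norm (curve_int q h w - curve_int q h x)" .
    then show "norm (curve_int q (shift \<tau> h) x - curve_int q h x) \<le> \<epsilon>"
      using b1 b2 b3 by linarith
  qed
qed

lemma IDIFF:
  fixes g :: "real \<Rightarrow> 'b::banach"
  assumes gi: "g integrable_on {A..max s \<rho>}" and As: "A \<le> s" and Ar: "A \<le> \<rho>"
  shows "norm (integral {A..s} g - integral {A..\<rho>} g) = norm (integral {min s \<rho>..max s \<rho>} g)"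
proof (cases "\<rho> \<le> s")
  case True
  have "integral {A..\<rho>} g + integral {\<rho>..s} g = integral {A..s} g"
    by (rule Henstock_Kurzweil_Integration.integral_combine[OF Ar True]) (use gi True in simp)
  then show ?thesis using True by (simp add: algebra_simps flip: \<open>integral {A..\<rho>} g + integral {\<rho>..s} g = integral {A..s} g\<close>)
next
  case False
  have "integral {A..s} g + integral {s..\<rho>} g = integral {A..\<rho>} g"
    by (rule Henstock_Kurzweil_Integration.integral_combine[OF As]) (use gi False in auto)
  then show ?thesis using False
    by (simp add: norm_minus_commute algebra_simps flip: \<open>integral {A..s} g + integral {s..\<rho>} g = integral {A..\<rho>} g\<close>)
qed

lemma closure_WTC: "f \<in> (sigma_top \<Theta>) closure_of E \<Longrightarrow> f \<in> WTC \<Theta>"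
  using closure_of_subset_topspace[of "sigma_top \<Theta>" E] topspace_sigma[of \<Theta>] by auto

lemma TB:
  fixes E :: "(real \<Rightarrow> 'a::euclidean_space \<Rightarrow> 'b::euclidean_space) set"
  assumes s: "suitable_moduli \<Theta>" and EW: "E \<subseteq> WTC \<Theta>" and eq: "equicont_mbounds E" and ep: "\<epsilon> > 0"
  shows "\<exists>\<delta>>0. \<forall>f \<in> (sigma_top \<Theta>) closure_of E. \<forall>s1 s2 c. -R \<le> s1 \<and> s1 \<le> s2 \<and> s2 \<le> R \<and> s2 - s1 < \<delta> \<and> norm c \<le> real j
      \<longrightarrow> norm (integral {s1..s2} (\<lambda>u. f u c)) \<le> \<epsilon>"
proof -
  obtain mb where mb: "\<forall>f\<in>E. mbound f (cball 0 (real j)) (mb f)" and eqc: "L1loc_equicont (mb ` E)"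
    using eq unfolding equicont_mbounds_def by blast
  define r where "r = \<bar>R\<bar> + 1"
  have r0: "r > 0" by (simp add: r_def)
  obtain \<delta>0 where d0: "\<delta>0 > 0" "\<forall>m\<in>mb ` E. \<forall>s t. -r \<le> s \<and> s \<le> t \<and> t \<le> r \<and> t - s < \<delta>0 \<longrightarrow> (LINT u:{s..t}|lborel. m u) < \<epsilon>/2"
    using eqc r0 ep unfolding L1loc_equicont_def by (metis half_gt_zero)
  have step1: "norm (integral {real_of_rat \<rho>1..real_of_rat \<rho>2} (\<lambda>u. f u c)) \<le> \<epsilon>"
    if f: "f \<in> (sigma_top \<Theta>) closure_of E" and rr: "\<rho>1 < \<rho>2" "-r \<le> real_of_rat \<rho>1" "real_of_rat \<rho>2 \<le> r"
      "real_of_rat \<rho>2 - real_of_rat \<rho>1 < \<delta>0" and c: "norm c \<le> real j" for f \<rho>1 \<rho>2 c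
  proof -
    have fW: "f \<in> WTC \<Theta>" using closure_WTC[OF f] .
    define q where "q = (\<rho>1, \<rho>2)"
    have vq: "valid_ivl q" using rr by (simp add: q_def valid_ivl_def)
    have iq: "ivl q = {real_of_rat \<rho>1..real_of_rat \<rho>2}" by (simp add: q_def ivl_eq)
    have Fv: "{(q, j)} \<subseteq> {(q,j). valid_ivl q}" using vq by simp
    have op: "openin (sigma_top \<Theta>) (nb \<Theta> {(q, j)} (\<epsilon>/2) f)" by (rule ball_open[OF s fW]) (use Fv in auto)
    have fin: "f \<in> nb \<Theta> {(q, j)} (\<epsilon>/2) f" by (rule nb_self[OF s fW Fv]) (use ep in simp)
    obtain g where g: "g \<in> E" "g \<in> nb \<Theta> {(q, j)} (\<epsilon>/2) f"
      using f op fin unfolding in_closure_of by blast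
    have gW: "g \<in> WTC \<Theta>" using g EW by auto
    have p: "pIj \<Theta> q j (\<lambda>t x. g t x - f t x) < \<epsilon>/2" using g(2) by (simp add: nb_def)
    have cK: "(\<lambda>_. c) \<in> Kset \<Theta> q j" by (rule const_Kset[OF s vq c])
    have 1: "norm (curve_int q g (\<lambda>_. c) - curve_int q f (\<lambda>_. c)) < \<epsilon>/2"
      using pIj_upper[OF s fW gW vq cK] p by linarith
    have mg: "mbound g (cball 0 (real j)) (mb g)" using mb g(1) by blast
    have le: "real_of_rat \<rho>1 \<le> real_of_rat \<rho>2" using rr by (simp add: of_rat_less_eq)
    have 2: "norm (integral {real_of_rat \<rho>1..real_of_rat \<rho>2} (\<lambda>u. g u c)) \<le> (LINT u:{real_of_rat \<rho>1..real_of_rat \<rho>2}|lborel. mb g u)"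
      using INT(4,6)[OF WTC_C1[OF gW] mg le, of "\<lambda>_. c"] c by simp
    have 3: "(LINT u:{real_of_rat \<rho>1..real_of_rat \<rho>2}|lborel. mb g u) < \<epsilon>/2"
      using d0(2) g(1) rr le by blast
    have e1: "curve_int q g (\<lambda>_. c) = integral {real_of_rat \<rho>1..real_of_rat \<rho>2} (\<lambda>u. g u c)"
      using curve_int_integral[OF gW vq cK] iq by simp
    have e2: "curve_int q f (\<lambda>_. c) = integral {real_of_rat \<rho>1..real_of_rat \<rho>2} (\<lambda>u. f u c)"
      using curve_int_integral[OF fW vq cK] iq by simp
    show ?thesis using 1 2 3 e1 e2 norm_triangle_sub[of "integral {real_of_rat \<rho>1..real_of_rat \<rho>2} (\<lambda>u. f u c)"
        "integral {real_of_rat \<rho>1..real_of_rat \<rho>2} (\<lambda>u. g u c)"]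
      by (simp add: norm_minus_commute)
  qed
  show ?thesis
  proof (intro exI[of _ \<delta>0] conjI ballI allI impI)
    show "\<delta>0 > 0" by (rule d0(1))
    fix f s1 s2 and c :: 'a
    assume f: "f \<in> (sigma_top \<Theta>) closure_of E"
      and ss: "-R \<le> s1 \<and> s1 \<le> s2 \<and> s2 \<le> R \<and> s2 - s1 < \<delta>0 \<and> norm c \<le> real j"
    have fW: "f \<in> WTC \<Theta>" using closure_WTC[OF f] .
    show "norm (integral {s1..s2} (\<lambda>u. f u c)) \<le> \<epsilon>"
    proof (cases "s1 = s2")
      case True then show ?thesis using ep by simp
    next
      case False
      then have s12: "s1 < s2" using ss by simp
      show ?thesis
      proof (rule ccontr)
        assume "\<not> ?thesis"
        then have big: "norm (integral {s1..s2} (\<lambda>u. f u c)) > \<epsilon>" by simp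
        obtain mf where mf: "mbound f (cball 0 (real j)) mf" using WTC_mbound fW by blast
        have fi: "(\<lambda>u. f u c) integrable_on {-r..r}"
          by (rule WTC_int(1)[OF fW mf]) (use ss in \<open>auto simp: r_def\<close>)
        define G where "G = (\<lambda>v. integral {-r..v} (\<lambda>u. f u c))"
        have Gc: "continuous_on {-r..r} G" unfolding G_def by (rule indefinite_integral_continuous_1[OF fi])
        have Gd: "integral {a..b} (\<lambda>u. f u c) = G b - G a" if "-r \<le> a" "a \<le> b" "b \<le> r" for a b
        proof -
          have "integral {-r..a} (\<lambda>u. f u c) + integral {a..b} (\<lambda>u. f u c) = integral {-r..b} (\<lambda>u. f u c)"
            by (rule Henstock_Kurzweil_Integration.integral_combine[OF that(1,2)])
               (rule integrable_subinterval_real[OF fi], use that in auto)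
          then show ?thesis by (simp add: G_def algebra_simps)
        qed
        define \<eta> where "\<eta> = (norm (integral {s1..s2} (\<lambda>u. f u c)) - \<epsilon>) / 2"
        have eta: "\<eta> > 0" using big by (simp add: \<eta>_def)
        have s1in: "s1 \<in> {-r..r}" and s2in: "s2 \<in> {-r..r}" using ss by (auto simp: r_def)
        obtain d1 where d1: "d1 > 0" "\<forall>v\<in>{-r..r}. dist v s1 < d1 \<longrightarrow> dist (G v) (G s1) < \<eta>"
          using Gc s1in eta unfolding continuous_on_iff by blast
        obtain d2 where d2: "d2 > 0" "\<forall>v\<in>{-r..r}. dist v s2 < d2 \<longrightarrow> dist (G v) (G s2) < \<eta>"
          using Gc s2in eta unfolding continuous_on_iff by blast
        define X where "X = (\<delta>0 - (s2 - s1)) / 2"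
        have X0: "X > 0" using ss by (simp add: X_def)
        define \<gamma> where "\<gamma> = min 1 (min d1 (min d2 X))"
        have gam: "\<gamma> > 0" using d1 d2 X0 by (simp add: \<gamma>_def)
        obtain \<rho>1 :: rat where r1: "s1 - \<gamma> < real_of_rat \<rho>1" "real_of_rat \<rho>1 < s1"
          using of_rat_dense[of "s1 - \<gamma>" s1] gam by auto
        obtain \<rho>2 :: rat where r2: "s2 < real_of_rat \<rho>2" "real_of_rat \<rho>2 < s2 + \<gamma>"
          using of_rat_dense[of s2 "s2 + \<gamma>"] gam by auto
        have gl: "\<gamma> \<le> 1" "\<gamma> \<le> d1" "\<gamma> \<le> d2" "\<gamma> \<le> X" by (auto simp: \<gamma>_def)
        have rin: "real_of_rat \<rho>1 \<in> {-r..r}" "real_of_rat \<rho>2 \<in> {-r..r}"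
          using r1 r2 gl ss by (auto simp: r_def)
        have rlt: "\<rho>1 < \<rho>2" using r1 r2 s12 by (metis of_rat_less order.strict_trans)
        have rlen: "real_of_rat \<rho>2 - real_of_rat \<rho>1 < \<delta>0" using r1 r2 gl by (simp add: X_def)
        have S1: "norm (integral {real_of_rat \<rho>1..real_of_rat \<rho>2} (\<lambda>u. f u c)) \<le> \<epsilon>"
          by (rule step1[OF f rlt _ _ rlen]) (use rin ss in auto)
        have "integral {real_of_rat \<rho>1..real_of_rat \<rho>2} (\<lambda>u. f u c) = G (real_of_rat \<rho>2) - G (real_of_rat \<rho>1)"
          by (rule Gd) (use rin r1 r2 s12 in auto)
        moreover have "integral {s1..s2} (\<lambda>u. f u c) = G s2 - G s1"
          by (rule Gd) (use s1in s2in s12 in auto)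
        moreover have "dist (G (real_of_rat \<rho>1)) (G s1) < \<eta>" using d1(2) rin r1 gl by (auto simp: dist_real_def)
        moreover have "dist (G (real_of_rat \<rho>2)) (G s2) < \<eta>" using d2(2) rin r2 gl by (auto simp: dist_real_def)
        moreover have "norm (G s2 - G s1) \<le> norm (G (real_of_rat \<rho>2) - G (real_of_rat \<rho>1)) + norm (G (real_of_rat \<rho>1) - G s1)
            + norm (G (real_of_rat \<rho>2) - G s2)" by (rule tri3)
        ultimately show False using S1 by (simp add: dist_norm \<eta>_def)
      qed
    qed
  qed
qed

lemma norm4: fixes a b c d :: "'a::real_normed_vector"
  shows "norm (a - b - c + d) \<le> norm a + norm b + norm c + norm d"
proof -
  have "norm (a - b - c + d) \<le> norm (a - b - c) + norm d" by (rule norm_triangle_ineq)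
  also have "norm (a - b - c) \<le> norm (a - b) + norm c" by (rule norm_triangle_ineq4)
  also have "norm (a - b) \<le> norm a + norm b" by (rule norm_triangle_ineq4)
  finally show ?thesis by simp
qed

lemma PIECE:
  fixes f f0 :: "real \<Rightarrow> 'a::euclidean_space \<Rightarrow> 'b::euclidean_space"
  assumes s: "suitable_moduli \<Theta>" and fW: "f \<in> WTC \<Theta>" and f0W: "f0 \<in> WTC \<Theta>"
    and ar: "a < \<rho>" and As: "real_of_rat a \<le> sR" and c: "norm c \<le> real j"
    and tf: "norm (integral {min sR (real_of_rat \<rho>)..max sR (real_of_rat \<rho>)} (\<lambda>u. f u c)) \<le> eT"
    and tf0: "norm (integral {min sR (real_of_rat \<rho>)..max sR (real_of_rat \<rho>)} (\<lambda>u. f0 u c)) \<le> eT"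
    and p: "pIj \<Theta> (a, \<rho>) j (\<lambda>t x. f t x - f0 t x) < e'"
  shows "norm (integral {real_of_rat a..sR} (\<lambda>u. f u c) - integral {real_of_rat a..sR} (\<lambda>u. f0 u c)) < e' + 2 * eT"
proof -
  define A where "A = real_of_rat a"
  define P where "P = real_of_rat \<rho>"
  have AP: "A < P" using ar by (simp add: A_def P_def of_rat_less)
  have vq: "valid_ivl (a, \<rho>)" using ar by (simp add: valid_ivl_def)
  have iq: "ivl (a, \<rho>) = {A..P}" by (simp add: ivl_eq A_def P_def)
  have cK: "(\<lambda>_. c) \<in> Kset \<Theta> (a, \<rho>) j" by (rule const_Kset[OF s vq c])
  have X: "norm (integral {A..P} (\<lambda>u. f u c) - integral {A..P} (\<lambda>u. f0 u c)) < e'"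
    using pIj_upper[OF s f0W fW vq cK] p curve_int_integral[OF fW vq cK] curve_int_integral[OF f0W vq cK] iq
    by simp
  obtain m where m: "mbound f (cball 0 (real j)) m" using WTC_mbound fW by blast
  obtain m0 where m0: "mbound f0 (cball 0 (real j)) m0" using WTC_mbound f0W by blast
  have fi: "(\<lambda>u. f u c) integrable_on {A..max sR P}"
    by (rule WTC_int(1)[OF fW m]) (use As c in \<open>auto simp: A_def\<close>)
  have f0i: "(\<lambda>u. f0 u c) integrable_on {A..max sR P}"
    by (rule WTC_int(1)[OF f0W m0]) (use As c in \<open>auto simp: A_def\<close>)
  have Y: "norm (integral {A..sR} (\<lambda>u. f u c) - integral {A..P} (\<lambda>u. f u c)) \<le> eT"
    using IDIFF[OF fi, of] As AP tf by (simp add: A_def P_def)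
  have Z: "norm (integral {A..sR} (\<lambda>u. f0 u c) - integral {A..P} (\<lambda>u. f0 u c)) \<le> eT"
    using IDIFF[OF f0i, of] As AP tf0 by (simp add: A_def P_def)
  define Xd where "Xd = integral {A..P} (\<lambda>u. f u c) - integral {A..P} (\<lambda>u. f0 u c)"
  define Yd where "Yd = integral {A..sR} (\<lambda>u. f u c) - integral {A..P} (\<lambda>u. f u c)"
  define Zd where "Zd = integral {A..sR} (\<lambda>u. f0 u c) - integral {A..P} (\<lambda>u. f0 u c)"
  have eq: "integral {A..sR} (\<lambda>u. f u c) - integral {A..sR} (\<lambda>u. f0 u c) = Xd - 0 - Zd + Yd"
    unfolding Xd_def Yd_def Zd_def by (simp add: algebra_simps)
  have "norm (integral {A..sR} (\<lambda>u. f u c) - integral {A..sR} (\<lambda>u. f0 u c)) \<le> norm Xd + norm (0::'b) + norm Zd + norm Yd"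
    unfolding eq by (rule norm4)
  then have "norm (integral {A..sR} (\<lambda>u. f u c) - integral {A..sR} (\<lambda>u. f0 u c)) \<le> norm Xd + norm Zd + norm Yd" by simp
  moreover have "norm Xd < e'" "norm Yd \<le> eT" "norm Zd \<le> eT" using X Y Z by (simp_all add: Xd_def Yd_def Zd_def)
  ultimately show ?thesis by (simp add: A_def)
qed

lemma KEY:
  fixes E :: "(real \<Rightarrow> 'a::euclidean_space \<Rightarrow> 'b::euclidean_space) set" and t0 :: real
  assumes s: "suitable_moduli \<Theta>" and EW: "E \<subseteq> WTC \<Theta>" and eq: "equicont_mbounds E"
    and f0: "f0 \<in> (sigma_top \<Theta>) closure_of E" and vq: "valid_ivl q" and ep: "\<epsilon> > 0"
  shows "\<exists>\<delta>>0. \<exists>F e'. finite F \<and> F \<subseteq> {(q,j). valid_ivl q} \<and> e' > 0 \<and>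
    (\<forall>t f. \<bar>t - t0\<bar> < \<delta> \<longrightarrow> f \<in> (sigma_top \<Theta>) closure_of E \<longrightarrow> f \<in> nb \<Theta> F e' f0 \<longrightarrow>
       pIj \<Theta> q j (\<lambda>s x. shift t f s x - shift t0 f0 s x) < \<epsilon>)"
proof -
  have f0W: "f0 \<in> WTC \<Theta>" by (rule closure_WTC[OF f0])
  define h0 where "h0 = shift t0 f0"
  have h0W: "h0 \<in> WTC \<Theta>" unfolding h0_def by (rule SHIFT_WTC[OF s f0W])
  define l where "l = real_of_rat (fst q)"
  define r where "r = real_of_rat (snd q)"
  have lr: "l \<le> r" using valid_le[OF vq] by (simp add: l_def r_def)
  have iq: "ivl q = {l..r}" by (simp add: ivl_eq l_def r_def)
  obtain \<delta>1 where d1: "\<delta>1 > 0" "\<forall>\<tau>. \<bar>\<tau>\<bar> < \<delta>1 \<longrightarrow> (\<forall>x\<in>Kset \<Theta> q j. norm (curve_int q (shift \<tau> h0) x - curve_int q h0 x) \<le> \<epsilon>/4)"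
    using TRANS[OF s h0W vq, of "\<epsilon>/4" j] ep by auto
  obtain a :: rat where a: "min l (l + t0) - 3 < real_of_rat a" "real_of_rat a < min l (l + t0) - 2"
    using of_rat_dense[of "min l (l + t0) - 3" "min l (l + t0) - 2"] by auto
  obtain b :: rat where b: "max r (r + t0) + 2 < real_of_rat b" "real_of_rat b < max r (r + t0) + 3"
    using of_rat_dense[of "max r (r + t0) + 2" "max r (r + t0) + 3"] by auto
  define A where "A = real_of_rat a"
  define B where "B = real_of_rat b"
  define R where "R = \<bar>A\<bar> + \<bar>B\<bar>"
  have AB: "A < l - 2" "A < l + t0 - 2" "r + 2 < B" "r + t0 + 2 < B" using a b by (auto simp: A_def B_def)
  obtain \<delta>T where dT: "\<delta>T > 0" "\<forall>f \<in> (sigma_top \<Theta>) closure_of E. \<forall>s1 s2 c. -R \<le> s1 \<and> s1 \<le> s2 \<and> s2 \<le> R \<and> s2 - s1 < \<delta>T \<and> norm c \<le> real j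
      \<longrightarrow> norm (integral {s1..s2} (\<lambda>u. f u c)) \<le> \<epsilon>/16"
    using TB[OF s EW eq, of "\<epsilon>/16" R j] ep by auto
  define \<gamma> where "\<gamma> = min 1 (\<delta>T/2)"
  have gam: "\<gamma> > 0" "\<gamma> \<le> 1" "\<gamma> \<le> \<delta>T/2" using dT by (auto simp: \<gamma>_def)
  obtain \<rho>1 :: rat where r1: "l + t0 - \<gamma> < real_of_rat \<rho>1" "real_of_rat \<rho>1 < l + t0"
    using of_rat_dense[of "l + t0 - \<gamma>" "l + t0"] gam by auto
  obtain \<rho>2 :: rat where r2: "r + t0 - \<gamma> < real_of_rat \<rho>2" "real_of_rat \<rho>2 < r + t0"
    using of_rat_dense[of "r + t0 - \<gamma>" "r + t0"] gam by auto
  have "A < B" using AB lr by linarith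
  then have ab: "a < b" by (simp add: A_def B_def of_rat_less)
  have "A < real_of_rat \<rho>1" using AB r1 gam by linarith
  then have a1: "a < \<rho>1" by (simp add: A_def of_rat_less)
  have "A < real_of_rat \<rho>2" using AB r2 gam lr by linarith
  then have a2: "a < \<rho>2" by (simp add: A_def of_rat_less)
  define F where "F = {((a, b), j), ((a, \<rho>1), j), ((a, \<rho>2), j)}"
  have Fv: "F \<subseteq> {(q,j). valid_ivl q}" using ab a1 a2 by (simp add: F_def valid_ivl_def)
  have main: "\<forall>t f. \<bar>t - t0\<bar> < min \<delta>1 \<gamma> \<longrightarrow> f \<in> (sigma_top \<Theta>) closure_of E \<longrightarrow> f \<in> nb \<Theta> F (\<epsilon>/16) f0 \<longrightarrow>
       pIj \<Theta> q j (\<lambda>s x. shift t f s x - shift t0 f0 s x) < \<epsilon>"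
  proof (intro allI impI)
    fix t :: real and f :: "real \<Rightarrow> 'a \<Rightarrow> 'b"
    assume t: "\<bar>t - t0\<bar> < min \<delta>1 \<gamma>" and f: "f \<in> (sigma_top \<Theta>) closure_of E" and fn: "f \<in> nb \<Theta> F (\<epsilon>/16) f0"
    have fW: "f \<in> WTC \<Theta>" by (rule closure_WTC[OF f])
    have ftW: "shift t f \<in> WTC \<Theta>" by (rule SHIFT_WTC[OF s fW])
    have f0tW: "shift t f0 \<in> WTC \<Theta>" by (rule SHIFT_WTC[OF s f0W])
    have pA: "pIj \<Theta> (a, b) j (\<lambda>t x. f t x - f0 t x) < \<epsilon>/16"
      and pB: "pIj \<Theta> (a, \<rho>1) j (\<lambda>t x. f t x - f0 t x) < \<epsilon>/16"
      and pC: "pIj \<Theta> (a, \<rho>2) j (\<lambda>t x. f t x - f0 t x) < \<epsilon>/16"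
      using fn by (auto simp: nb_def F_def)
    have tt: "\<bar>t - t0\<bar> < \<delta>1" "\<bar>t - t0\<bar> < \<gamma>" using t by auto
    have part2: "pIj \<Theta> q j (\<lambda>s x. shift t f0 s x - h0 s x) \<le> \<epsilon>/4"
    proof (rule pIj_least[OF s h0W f0tW vq])
      fix x :: "real \<Rightarrow> 'a" assume x: "x \<in> Kset \<Theta> q j"
      have "shift (t - t0) h0 = shift t f0" by (simp add: h0_def shift_shift)
      then show "norm (curve_int q (shift t f0) x - curve_int q h0 x) \<le> \<epsilon>/4"
        using d1(2) tt x by metis
    qed
    have vJ: "valid_ivl (a, b)" using ab by (simp add: valid_ivl_def)
    have iJ: "ivl (a, b) = {A..B}" by (simp add: ivl_eq A_def B_def)
    have sub: "ivl q \<subseteq> ivl (a, b)" using iq iJ AB by auto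
    have part1: "pIj \<Theta> q j (\<lambda>s x. shift t f s x - shift t f0 s x) \<le> \<epsilon>/2"
    proof (rule pIj_least[OF s f0tW ftW vq])
      fix x :: "real \<Rightarrow> 'a" assume x: "x \<in> Kset \<Theta> q j"
      define z where "z = (\<lambda>u. x (max l (min r (u - t))))"
      have zK: "z \<in> Kset \<Theta> (a, b) j" using zK[OF s vq vJ sub x, of t] by (simp add: z_def l_def r_def)
      have fC1: "C1 f" "C2 f" using fW by (auto simp: WTC_def)
      have f0C1: "C1 f0" "C2 f0" using f0W by (auto simp: WTC_def)
      have At: "A \<le> l + t" and Bt: "r + t \<le> B" using AB tt gam by auto
      have dec: "curve_int q (shift t g) x =
        integral {A..B} (\<lambda>u. g u (z u)) - integral {A..l + t} (\<lambda>u. g u (x l))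
        - integral {A..B} (\<lambda>u. g u (x r)) + integral {A..r + t} (\<lambda>u. g u (x r))"
        if "C1 g" "C2 g" for g :: "real \<Rightarrow> 'a \<Rightarrow> 'b"
        using DECOMP[OF that vq x, of A t B] At Bt by (simp add: z_def l_def r_def)
      have lin: "l \<in> ivl q" and rin: "r \<in> ivl q" using iq lr by auto
      have xl: "norm (x l) \<le> real j" and xr: "norm (x r) \<le> real j" using Kset_bound[OF x] lin rin by auto
      have D1: "norm (integral {A..B} (\<lambda>u. f u (z u)) - integral {A..B} (\<lambda>u. f0 u (z u))) < \<epsilon>/16"
        using pIj_upper[OF s f0W fW vJ zK] pA curve_int_integral[OF fW vJ zK] curve_int_integral[OF f0W vJ zK] iJ
        by simp
      have cK: "(\<lambda>_. x r) \<in> Kset \<Theta> (a, b) j" by (rule const_Kset[OF s vJ xr])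
      have D3: "norm (integral {A..B} (\<lambda>u. f u (x r)) - integral {A..B} (\<lambda>u. f0 u (x r))) < \<epsilon>/16"
        using pIj_upper[OF s f0W fW vJ cK] pA curve_int_integral[OF fW vJ cK] curve_int_integral[OF f0W vJ cK] iJ
        by simp
      have RR: "-R \<le> A" "B \<le> R" by (auto simp: R_def)
      have D2: "norm (integral {A..l + t} (\<lambda>u. f u (x l)) - integral {A..l + t} (\<lambda>u. f0 u (x l))) < \<epsilon>/16 + 2 * (\<epsilon>/16)"
      proof -
        have mm: "-R \<le> min (l + t) (real_of_rat \<rho>1)" "min (l + t) (real_of_rat \<rho>1) \<le> max (l + t) (real_of_rat \<rho>1)"
          "max (l + t) (real_of_rat \<rho>1) \<le> R" "max (l + t) (real_of_rat \<rho>1) - min (l + t) (real_of_rat \<rho>1) < \<delta>T"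
          using RR AB r1 tt gam lr by (auto simp: abs_less_iff)
        show ?thesis unfolding A_def
          by (rule PIECE[OF s fW f0W a1 _ xl _ _ pB]) (use At dT(2) f f0 mm xl in \<open>auto simp: A_def\<close>)
      qed
      have D4: "norm (integral {A..r + t} (\<lambda>u. f u (x r)) - integral {A..r + t} (\<lambda>u. f0 u (x r))) < \<epsilon>/16 + 2 * (\<epsilon>/16)"
      proof -
        have mm: "-R \<le> min (r + t) (real_of_rat \<rho>2)" "min (r + t) (real_of_rat \<rho>2) \<le> max (r + t) (real_of_rat \<rho>2)"
          "max (r + t) (real_of_rat \<rho>2) \<le> R" "max (r + t) (real_of_rat \<rho>2) - min (r + t) (real_of_rat \<rho>2) < \<delta>T"
          using RR AB r2 tt gam lr by (auto simp: abs_less_iff)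
        have Art: "A \<le> r + t" using At lr by simp
        show ?thesis unfolding A_def
          by (rule PIECE[OF s fW f0W a2 _ xr _ _ pC]) (use Art dT(2) f f0 mm xr in \<open>auto simp: A_def\<close>)
      qed
      have "curve_int q (shift t f) x - curve_int q (shift t f0) x =
         (integral {A..B} (\<lambda>u. f u (z u)) - integral {A..B} (\<lambda>u. f0 u (z u)))
         - (integral {A..l + t} (\<lambda>u. f u (x l)) - integral {A..l + t} (\<lambda>u. f0 u (x l)))
         - (integral {A..B} (\<lambda>u. f u (x r)) - integral {A..B} (\<lambda>u. f0 u (x r)))
         + (integral {A..r + t} (\<lambda>u. f u (x r)) - integral {A..r + t} (\<lambda>u. f0 u (x r)))"
        unfolding dec[OF fC1] dec[OF f0C1] by (simp add: algebra_simps)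
      then have "norm (curve_int q (shift t f) x - curve_int q (shift t f0) x) \<le>
         norm (integral {A..B} (\<lambda>u. f u (z u)) - integral {A..B} (\<lambda>u. f0 u (z u)))
         + norm (integral {A..l + t} (\<lambda>u. f u (x l)) - integral {A..l + t} (\<lambda>u. f0 u (x l)))
         + norm (integral {A..B} (\<lambda>u. f u (x r)) - integral {A..B} (\<lambda>u. f0 u (x r)))
         + norm (integral {A..r + t} (\<lambda>u. f u (x r)) - integral {A..r + t} (\<lambda>u. f0 u (x r)))"
        by (simp only: norm4)
      then show "norm (curve_int q (shift t f) x - curve_int q (shift t f0) x) \<le> \<epsilon>/2"
        using D1 D2 D3 D4 by linarith
    qed
    have "pIj \<Theta> q j (\<lambda>s x. shift t f s x - h0 s x) \<le> pIj \<Theta> q j (\<lambda>s x. shift t f s x - shift t f0 s x) + pIj \<Theta> q j (\<lambda>s x. shift t f0 s x - h0 s x)"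
      by (rule pIj_tri[OF s h0W ftW f0tW vq])
    then show "pIj \<Theta> q j (\<lambda>s x. shift t f s x - shift t0 f0 s x) < \<epsilon>"
      using part1 part2 ep unfolding h0_def by linarith
  qed
  have fF: "finite F" by (simp add: F_def)
  show ?thesis
    apply (rule exI[of _ "min \<delta>1 \<gamma>"], rule conjI)
     apply (simp add: d1 gam)
    apply (rule exI[of _ F], rule exI[of _ "\<epsilon>/16"])
    using main Fv ep fF by simp
qed

lemma CONT:
  fixes E :: "(real \<Rightarrow> 'a::euclidean_space \<Rightarrow> 'b::euclidean_space) set"
  assumes s: "suitable_moduli \<Theta>" and EW: "E \<subseteq> WTC \<Theta>" and eq: "equicont_mbounds E"
  shows "continuous_map (prod_topology euclideanreal (subtopology (sigma_top \<Theta>) ((sigma_top \<Theta>) closure_of E)))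
           (sigma_top \<Theta>) (\<lambda>(t, f). shift t f)"
proof -
  define C where "C = (sigma_top \<Theta>) closure_of E"
  define X where "X = prod_topology euclideanreal (subtopology (sigma_top \<Theta>) C)"
  have tX: "topspace X = UNIV \<times> C"
    using closure_of_subset_topspace[of "sigma_top \<Theta>" E] by (auto simp: X_def C_def)
  have CW: "\<And>f. f \<in> C \<Longrightarrow> f \<in> WTC \<Theta>" unfolding C_def by (rule closure_WTC)
  have img: "(\<lambda>(t, f). shift t f) ` topspace X \<subseteq> topspace (sigma_top \<Theta>)"
    using tX CW SHIFT_WTC[OF s] by (auto simp: topspace_sigma)
  have opn: "openin X {p \<in> topspace X. (\<lambda>(t, f). shift t f) p \<in> U}" if U: "openin (sigma_top \<Theta>) U" for U
  proof (subst openin_subopen, intro ballI)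
    fix p assume p: "p \<in> {p \<in> topspace X. (\<lambda>(t, f). shift t f) p \<in> U}"
    obtain t0 f0 where p0: "p = (t0, f0)" by (cases p)
    have f0C: "f0 \<in> C" and inU: "shift t0 f0 \<in> U" using p p0 tX by auto
    obtain F e where F: "finite F" "F \<subseteq> {(q,j). valid_ivl q}" "e > 0" "nb \<Theta> F e (shift t0 f0) \<subseteq> U"
      using U inU unfolding openin_sigma sigopen_def by blast
    have "\<forall>k\<in>F. \<exists>w. fst w > 0 \<and> finite (fst (snd w)) \<and> fst (snd w) \<subseteq> {(q,j). valid_ivl q} \<and> snd (snd w) > 0 \<and>
      (\<forall>t f. \<bar>t - t0\<bar> < fst w \<longrightarrow> f \<in> C \<longrightarrow> f \<in> nb \<Theta> (fst (snd w)) (snd (snd w)) f0 \<longrightarrow>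
       pIj \<Theta> (fst k) (snd k) (\<lambda>s x. shift t f s x - shift t0 f0 s x) < e)"
    proof
      fix k assume "k \<in> F"
      then have "valid_ivl (fst k)" using F(2) by auto
      from KEY[OF s EW eq f0C[unfolded C_def] this F(3), of t0 "snd k"]
      obtain \<delta> F' e' where "\<delta> > 0" "finite F'" "F' \<subseteq> {(q,j). valid_ivl q}" "e' > 0"
        "\<forall>t f. \<bar>t - t0\<bar> < \<delta> \<longrightarrow> f \<in> C \<longrightarrow> f \<in> nb \<Theta> F' e' f0 \<longrightarrow>
       pIj \<Theta> (fst k) (snd k) (\<lambda>s x. shift t f s x - shift t0 f0 s x) < e"
        unfolding C_def by blast
      then show "\<exists>w. fst w > 0 \<and> finite (fst (snd w)) \<and> fst (snd w) \<subseteq> {(q,j). valid_ivl q} \<and> snd (snd w) > 0 \<and>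
      (\<forall>t f. \<bar>t - t0\<bar> < fst w \<longrightarrow> f \<in> C \<longrightarrow> f \<in> nb \<Theta> (fst (snd w)) (snd (snd w)) f0 \<longrightarrow>
       pIj \<Theta> (fst k) (snd k) (\<lambda>s x. shift t f s x - shift t0 f0 s x) < e)"
        by (intro exI[of _ "(\<delta>, F', e')"]) simp
    qed
    then obtain W where W: "\<forall>k\<in>F. fst (W k) > 0 \<and> finite (fst (snd (W k))) \<and> fst (snd (W k)) \<subseteq> {(q,j). valid_ivl q} \<and> snd (snd (W k)) > 0 \<and>
      (\<forall>t f. \<bar>t - t0\<bar> < fst (W k) \<longrightarrow> f \<in> C \<longrightarrow> f \<in> nb \<Theta> (fst (snd (W k))) (snd (snd (W k))) f0 \<longrightarrow>
       pIj \<Theta> (fst k) (snd k) (\<lambda>s x. shift t f s x - shift t0 f0 s x) < e)"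
      by (rule bchoice[elim_format]) blast
    define Dl where "Dl = (\<lambda>k. fst (W k))"
    define FF where "FF = (\<lambda>k. fst (snd (W k)))"
    define EE where "EE = (\<lambda>k. snd (snd (W k)))"
    have DFE: "\<And>k. k \<in> F \<Longrightarrow> Dl k > 0 \<and> finite (FF k) \<and> FF k \<subseteq> {(q,j). valid_ivl q} \<and> EE k > 0 \<and>
      (\<forall>t f. \<bar>t - t0\<bar> < Dl k \<longrightarrow> f \<in> C \<longrightarrow> f \<in> nb \<Theta> (FF k) (EE k) f0 \<longrightarrow>
       pIj \<Theta> (fst k) (snd k) (\<lambda>s x. shift t f s x - shift t0 f0 s x) < e)"
      using W unfolding Dl_def FF_def EE_def by blast
    define \<delta> where "\<delta> = (if F = {} then 1 else Min (Dl ` F))"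
    define e' where "e' = (if F = {} then 1 else Min (EE ` F))"
    define F' where "F' = (\<Union>k\<in>F. FF k)"
    have dpos: "\<delta> > 0" using DFE F(1) by (simp add: \<delta>_def)
    have epos: "e' > 0" using DFE F(1) by (simp add: e'_def)
    have dle: "\<And>k. k \<in> F \<Longrightarrow> \<delta> \<le> Dl k" using F(1) by (auto simp: \<delta>_def)
    have ele: "\<And>k. k \<in> F \<Longrightarrow> e' \<le> EE k" using F(1) by (auto simp: e'_def)
    have F'f: "finite F'" using DFE F(1) by (simp add: F'_def)
    have F'v: "F' \<subseteq> {(q,j). valid_ivl q}"
    proof
      fix y assume "y \<in> F'"
      then obtain k where k: "k \<in> F" "y \<in> FF k" by (auto simp: F'_def)
      then show "y \<in> {(q,j). valid_ivl q}" using DFE[OF k(1)] by blast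
    qed
    have f0W: "f0 \<in> WTC \<Theta>" using CW f0C .
    define T where "T = {t. \<bar>t - t0\<bar> < \<delta>} \<times> (C \<inter> nb \<Theta> F' e' f0)"
    show "\<exists>T. openin X T \<and> p \<in> T \<and> T \<subseteq> {p \<in> topspace X. (\<lambda>(t, f). shift t f) p \<in> U}"
    proof (intro exI[of _ T] conjI)
      have o1: "openin euclideanreal {t. \<bar>t - t0\<bar> < \<delta>}"
      proof -
        have "{t. \<bar>t - t0\<bar> < \<delta>} = ball t0 \<delta>" by (auto simp: dist_real_def abs_minus_commute)
        then show ?thesis by simp
      qed
      have o2: "openin (subtopology (sigma_top \<Theta>) C) (C \<inter> nb \<Theta> F' e' f0)"
        by (rule openin_subtopology_Int2[OF ball_open[OF s f0W F'f F'v]])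
      show "openin X T" unfolding T_def X_def openin_prod_Times_iff using o1 o2 by blast
      show "p \<in> T" unfolding T_def p0 using f0C nb_self[OF s f0W F'v epos] dpos by auto
      show "T \<subseteq> {p \<in> topspace X. (\<lambda>(t, f). shift t f) p \<in> U}"
      proof
        fix pp assume pp: "pp \<in> T"
        obtain t f where ptf: "pp = (t, f)" by (cases pp)
        have t: "\<bar>t - t0\<bar> < \<delta>" and fC: "f \<in> C" and fn: "f \<in> nb \<Theta> F' e' f0" using pp ptf by (auto simp: T_def)
        have "shift t f \<in> nb \<Theta> F e (shift t0 f0)"
          unfolding nb_def
        proof (intro CollectI conjI ballI)
          show "shift t f \<in> WTC \<Theta>" by (rule SHIFT_WTC[OF s CW[OF fC]])
          fix k assume k: "k \<in> F"
          have "f \<in> nb \<Theta> (FF k) (EE k) f0"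
            using fn ele[OF k] k unfolding nb_def F'_def by fastforce
          then have "pIj \<Theta> (fst k) (snd k) (\<lambda>s x. shift t f s x - shift t0 f0 s x) < e"
            using DFE[OF k] t dle[OF k] fC by auto
          then show "case k of (q, j) \<Rightarrow> pIj \<Theta> q j (\<lambda>ta x. shift t f ta x - shift t0 f0 ta x) < e"
            by (simp add: case_prod_beta)
        qed
        then show "pp \<in> {p \<in> topspace X. (\<lambda>(t, f). shift t f) p \<in> U}"
          using F(4) fC tX ptf by auto
      qed
    qed
  qed
  show ?thesis
    unfolding X_def[symmetric] C_def[symmetric] continuous_map
    using img opn by blast
qed

theorem theorem3p1:
  fixes \<Theta> :: modfam
    and E :: "(real \<Rightarrow> 'a::euclidean_space \<Rightarrow> 'b::euclidean_space) set"
  assumes "suitable_moduli \<Theta>"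
    and "E \<subseteq> WTC \<Theta>"
    and "equicont_mbounds E"
  shows "(\<forall>t. \<forall>f\<in>(sigma_top \<Theta>) closure_of E. shift t f \<in> WTC \<Theta>) \<and>
         continuous_map (prod_topology euclideanreal (subtopology (sigma_top \<Theta>) ((sigma_top \<Theta>) closure_of E)))
           (sigma_top \<Theta>) (\<lambda>(t, f). shift t f) \<and>
         (\<forall>f::real \<Rightarrow> 'a \<Rightarrow> 'b. f \<in> WTC \<Theta> \<longrightarrow> equicont_mbounds_fun f \<longrightarrow>
            (\<forall>t. \<forall>g\<in>Hull \<Theta> f. shift t g \<in> Hull \<Theta> f) \<and>
            continuous_map (prod_topology euclideanreal (subtopology (sigma_top \<Theta>) (Hull \<Theta> f)))
              (subtopology (sigma_top \<Theta>) (Hull \<Theta> f)) (\<lambda>(t, g). shift t g) \<and>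
            (\<forall>g\<in>Hull \<Theta> f. shift 0 g = g \<and> (\<forall>t s. shift (t + s) g = shift t (shift s g))))"
proof -
  note s = assms(1)
  have P1: "\<forall>t. \<forall>f\<in>(sigma_top \<Theta>) closure_of E. shift t f \<in> WTC \<Theta>"
    using SHIFT_WTC[OF s] closure_WTC by blast
  have P2: "continuous_map (prod_topology euclideanreal (subtopology (sigma_top \<Theta>) ((sigma_top \<Theta>) closure_of E)))
           (sigma_top \<Theta>) (\<lambda>(t, f). shift t f)"
    by (rule CONT[OF assms])
  have P3: "(\<forall>t. \<forall>g\<in>Hull \<Theta> f. shift t g \<in> Hull \<Theta> f) \<and>
            continuous_map (prod_topology euclideanreal (subtopology (sigma_top \<Theta>) (Hull \<Theta> f)))
              (subtopology (sigma_top \<Theta>) (Hull \<Theta> f)) (\<lambda>(t, g). shift t g) \<and>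
            (\<forall>g\<in>Hull \<Theta> f. shift 0 g = g \<and> (\<forall>t s. shift (t + s) g = shift t (shift s g)))"
    if fW: "f \<in> WTC \<Theta>" and em: "equicont_mbounds_fun f" for f :: "real \<Rightarrow> 'a \<Rightarrow> 'b"
  proof -
    define E' where "E' = range (\<lambda>t. shift t f)"
    define H where "H = Hull \<Theta> f"
    have E'W: "E' \<subseteq> WTC \<Theta>" using SHIFT_WTC[OF s fW] by (auto simp: E'_def)
    have em': "equicont_mbounds E'" using em by (simp add: equicont_mbounds_fun_def E'_def)
    have H: "H = (sigma_top \<Theta>) closure_of E'" by (simp add: H_def Hull_def E'_def)
    have HW: "H \<subseteq> WTC \<Theta>" using H closure_WTC by blast
    have E'H: "E' \<subseteq> H" unfolding H by (rule closure_of_subset) (use E'W topspace_sigma in auto)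
    have cont: "continuous_map (prod_topology euclideanreal (subtopology (sigma_top \<Theta>) H)) (sigma_top \<Theta>) (\<lambda>(t, g). shift t g)"
      unfolding H by (rule CONT[OF s E'W em'])
    have inv: "shift t g \<in> H" if g: "g \<in> H" for t g
    proof -
      have c1: "continuous_map (subtopology (sigma_top \<Theta>) H) (prod_topology euclideanreal (subtopology (sigma_top \<Theta>) H)) (\<lambda>g. (t, g))"
        by (intro continuous_map_pairedI) (auto simp: continuous_map_id[unfolded id_def])
      have c2: "continuous_map (subtopology (sigma_top \<Theta>) H) (sigma_top \<Theta>) (\<lambda>g. shift t g)"
        using continuous_map_compose[OF c1 cont] by (simp add: o_def)
      have cl: "(subtopology (sigma_top \<Theta>) H) closure_of E' = H"
        unfolding closure_of_subtopology using E'H H by (simp add: Int_absorb1 Int_absorb2 closure_of_subset_topspace)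
      have "(\<lambda>g. shift t g) ` H \<subseteq> (sigma_top \<Theta>) closure_of ((\<lambda>g. shift t g) ` E')"
        using continuous_map_image_closure_subset[OF c2, of E'] cl by simp
      also have "(\<lambda>g. shift t g) ` E' \<subseteq> E'" by (auto simp: E'_def shift_shift)
      then have "(sigma_top \<Theta>) closure_of ((\<lambda>g. shift t g) ` E') \<subseteq> H" unfolding H by (rule closure_of_mono)
      finally show ?thesis using g by blast
    qed
    have "continuous_map (prod_topology euclideanreal (subtopology (sigma_top \<Theta>) H)) (subtopology (sigma_top \<Theta>) H) (\<lambda>(t, g). shift t g)"
      unfolding continuous_map_in_subtopology using cont inv by auto
    then show ?thesis using inv shift_0 shift_add unfolding H_def by blast
  qed
  show ?thesis using P1 P2 P3 by blast
qed

end
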